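(* Fix integers $0\le d\le m$, $\delta\in(0,1)$, $\chi>0$. There is $\varepsilon_0>0$ such that for all $0<\varepsilon<\varepsilon_0$ the following holds. Let $r>0$ with $2r^\delta<\varepsilon$, let $0<\eta\le p\le r/2$ and $0<\widetilde\eta\le\widetilde p$ satisfy (GT1): $\widetilde p\le e^\varepsilon p$ and $e^{-\varepsilon}\le\widetilde\eta/\eta\le e^\varepsilon$, and let $F=D+H:B^m[r]\to\mathbb R^m$ satisfy (GT2)–(GT3). Then for every $V\in\mathscr M^u_{p,\eta}$ there is a unique admissible graph $\mathscr F(V)\in\mathscr M^u_{\widetilde p,\widetilde\eta}$ with representing function $\widetilde G:B^d[\widetilde p]\to\mathbb R^{m-d}$ such that $\{(w,\widetilde G(w)):w\in B^d[\widetilde p]\}\subset F(V)$. Moreover, for all $V_1,V_2\in\mathscr M^u_{p,\eta}$: (1) $d_{C^0}(\mathscr F(V_1),\mathscr F(V_2))\le e^{-\chi/2}d_{C^0}(V_1,V_2)$; (2) $d_{C^1}(\mathscr F(V_1),\mathscr F(V_2))\le e^{-\chi/2}\big(d_{C^1}(V_1,V_2)+d_{C^0}(V_1,V_2)^\delta\big)$.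
   Context: $\|\cdot\|$ Euclidean norm/operator norm; $B^n[r]$ the ball of radius $r$ at $0$ in $\mathbb R^n$; $\|h\|_{C^0}=\sup\|h\|$, ${\rm Hol}_\delta(h)=\sup_{x\ne y}\|h(x)-h(y)\|/\|x-y\|^\delta$, $\|h\|_{C^1}=\|h\|_{C^0}+\|dh\|_{C^0}$. $\mathscr M^u_{p,\eta}$ is the set of graphs $\{(v,G(v)):v\in B^d[p]\}$ with $G:B^d[p]\to\mathbb R^{m-d}$ $C^{1+\delta}$ satisfying (AM1) $\|G(0)\|\le10^{-3}\eta$, (AM2) $\|dG_0\|\le\frac12\eta^\delta$, (AM3) $\|dG\|_{C^0}+{\rm Hol}_\delta(dG)\le\frac12$ on $B^d[p]$. For graphs $V_1,V_2$ with representing functions $G_1,G_2$ on the same domain, $d_{C^i}(V_1,V_2)=\|G_1-G_2\|_{C^i}$. (GT2): $D={\rm diag}(D_1,D_2)$, $D_1$ on $\mathbb R^d$, $D_2$ on $\mathbb R^{m-d}$ invertible linear with $\|D_1^{-1}\|<e^{-\chi}$, $\|D_2\|<e^{-\chi}$. (GT3): $H:B^m[r]\to\mathbb R^m$ is $C^{1+\delta}$ with $\|H(0)\|<\varepsilon\eta$, $\|dH\|_{C^0(B^m[t])}<\varepsilon t^\delta$ for all $t\in[\eta,2p]$, and ${\rm Hol}_\delta(dH)<\varepsilon$. *)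

theory Defs
  imports "HOL-Analysis.Analysis"
begin

definition c0norm :: "'x set \<Rightarrow> ('x \<Rightarrow> 'y::real_normed_vector) \<Rightarrow> real" where
  "c0norm S h = Sup ((\<lambda>x. norm (h x)) ` S)"

definition hol_quots :: "real \<Rightarrow> 'x::real_normed_vector set \<Rightarrow> ('x \<Rightarrow> 'y::real_normed_vector) \<Rightarrow> real set" where
  "hol_quots \<delta> S h = {norm (h x - h y) / (norm (x - y) powr \<delta>) | x y. x \<in> S \<and> y \<in> S \<and> x \<noteq> y}"

definition hol :: "real \<Rightarrow> 'x::real_normed_vector set \<Rightarrow> ('x \<Rightarrow> 'y::real_normed_vector) \<Rightarrow> real" where
  "hol \<delta> S h = Sup (hol_quots \<delta> S h)"

text \<open>Derivative of a map on a set S (Frechet derivative within S), as a bounded linear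
  operator, so that its norm is the operator norm.\<close>
definition dfun :: "'x::real_normed_vector set \<Rightarrow> ('x \<Rightarrow> 'y::real_normed_vector) \<Rightarrow> 'x \<Rightarrow> ('x \<Rightarrow>\<^sub>L 'y)" where
  "dfun S h x = Blinfun (frechet_derivative h (at x within S))"

definition C1delta_on :: "real \<Rightarrow> 'x::real_normed_vector set \<Rightarrow> ('x \<Rightarrow> 'y::real_normed_vector) \<Rightarrow> bool" where
  "C1delta_on \<delta> S h \<longleftrightarrow> (\<forall>x\<in>S. h differentiable (at x within S)) \<and> bdd_above (hol_quots \<delta> S (dfun S h))"

definition graph_on :: "real \<Rightarrow> ('a::euclidean_space \<Rightarrow> 'b::euclidean_space) \<Rightarrow> ('a \<times> 'b) set" where
  "graph_on p G = {(v, G v) | v. v \<in> cball 0 p}"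

definition adm_fun :: "real \<Rightarrow> real \<Rightarrow> real \<Rightarrow> ('a::euclidean_space \<Rightarrow> 'b::euclidean_space) \<Rightarrow> bool" where
  "adm_fun \<delta> p \<eta> G \<longleftrightarrow>
     C1delta_on \<delta> (cball 0 p) G \<and>
     norm (G 0) \<le> 10 powr (-3) * \<eta> \<and>
     norm (dfun (cball 0 p) G 0) \<le> 1/2 * \<eta> powr \<delta> \<and>
     c0norm (cball 0 p) (dfun (cball 0 p) G) + hol \<delta> (cball 0 p) (dfun (cball 0 p) G) \<le> 1/2"

definition Mu :: "real \<Rightarrow> real \<Rightarrow> real \<Rightarrow> ('a::euclidean_space \<times> 'b::euclidean_space) set set" where
  "Mu \<delta> p \<eta> = {graph_on p G | G. adm_fun \<delta> p \<eta> G}"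

definition dC0 :: "real \<Rightarrow> ('a::euclidean_space \<Rightarrow> 'b::euclidean_space) \<Rightarrow> ('a \<Rightarrow> 'b) \<Rightarrow> real" where
  "dC0 p G1 G2 = c0norm (cball 0 p) (\<lambda>v. G1 v - G2 v)"

definition dC1 :: "real \<Rightarrow> ('a::euclidean_space \<Rightarrow> 'b::euclidean_space) \<Rightarrow> ('a \<Rightarrow> 'b) \<Rightarrow> real" where
  "dC1 p G1 G2 = c0norm (cball 0 p) (\<lambda>v. G1 v - G2 v)
     + c0norm (cball 0 p) (\<lambda>v. dfun (cball 0 p) G1 v - dfun (cball 0 p) G2 v)"

end

theory Submission
  imports Defs "HOL-Analysis.Analysis"
begin


lemma dfun_has_derivative:
  assumes "h differentiable (at x within S)"
  shows "(h has_derivative blinfun_apply (dfun S h x)) (at x within S)"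
proof -
  have d: "(h has_derivative frechet_derivative h (at x within S)) (at x within S)"
    using assms frechet_derivative_works by blast
  hence "bounded_linear (frechet_derivative h (at x within S))"
    using has_derivative_bounded_linear by blast
  thus ?thesis using d unfolding dfun_def by (simp add: bounded_linear_Blinfun_apply)
qed

lemma C1_has_derivative:
  assumes "C1delta_on \<delta> S h" "x \<in> S"
  shows "(h has_derivative blinfun_apply (dfun S h x)) (at x within S)"
  using assms dfun_has_derivative unfolding C1delta_on_def by blast

lemma hol_le:
  assumes "bdd_above (hol_quots \<delta> S f)" "x \<in> S" "y \<in> S"
  shows "norm (f x - f y) \<le> hol \<delta> S f * norm (x - y) powr \<delta>"
proof (cases "x = y")
  case True thus ?thesis by simp
next
  case False
  let ?q = "norm (f x - f y) / (norm (x - y) powr \<delta>)"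
  have "?q \<in> hol_quots \<delta> S f" unfolding hol_quots_def using assms False by blast
  hence "?q \<le> hol \<delta> S f" unfolding hol_def using assms(1) by (rule cSup_upper)
  moreover have "norm (x - y) powr \<delta> > 0" using False by simp
  ultimately show ?thesis by (simp add: divide_le_eq)
qed

lemma hol_nonneg:
  assumes "bdd_above (hol_quots \<delta> S f)" "x \<in> S" "y \<in> S" "x \<noteq> y"
  shows "0 \<le> hol \<delta> S f"
proof -
  let ?q = "norm (f x - f y) / (norm (x - y) powr \<delta>)"
  have "?q \<in> hol_quots \<delta> S f" unfolding hol_quots_def using assms by blast
  hence "?q \<le> hol \<delta> S f" unfolding hol_def using assms(1) by (rule cSup_upper)
  moreover have "0 \<le> ?q" by simp
  ultimately show ?thesis by linarith
qed

lemma hol_least: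
  assumes "\<And>x y. x \<in> S \<Longrightarrow> y \<in> S \<Longrightarrow> x \<noteq> y \<Longrightarrow> norm (f x - f y) \<le> B * norm (x - y) powr \<delta>"
    and "x0 \<in> S" "y0 \<in> S" "x0 \<noteq> y0"
  shows "bdd_above (hol_quots \<delta> S f) \<and> hol \<delta> S f \<le> B"
proof -
  have le: "q \<le> B" if "q \<in> hol_quots \<delta> S f" for q
  proof -
    from that obtain x y where q: "q = norm (f x - f y) / (norm (x - y) powr \<delta>)"
      and xy: "x \<in> S" "y \<in> S" "x \<noteq> y" unfolding hol_quots_def by blast
    have "norm (x - y) powr \<delta> > 0" using xy by simp
    thus ?thesis using q assms(1)[OF xy] by (simp add: divide_le_eq)
  qed
  have ne: "hol_quots \<delta> S f \<noteq> {}" unfolding hol_quots_def using assms(2-4) by blast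
  show ?thesis unfolding hol_def using le ne by (meson bdd_aboveI cSup_least)
qed

lemma c0_upper:
  assumes "bdd_above ((\<lambda>x. norm (h x)) ` S)" "x \<in> S"
  shows "norm (h x) \<le> c0norm S h"
  unfolding c0norm_def using assms by (simp add: cSup_upper)

lemma c0_least:
  assumes "S \<noteq> {}" "\<And>x. x \<in> S \<Longrightarrow> norm (h x) \<le> B"
  shows "c0norm S h \<le> B"
  unfolding c0norm_def using assms by (auto intro!: cSup_least)

lemma hol_bdd_c0:
  assumes "bdd_above (hol_quots \<delta> S f)" "T \<subseteq> S" "x0 \<in> S" "S \<subseteq> cball 0 R" "0 < \<delta>"
  shows "bdd_above ((\<lambda>x. norm (f x)) ` T)"
proof -
  have "norm (f x) \<le> norm (f x0) + \<bar>hol \<delta> S f\<bar> * (2*R) powr \<delta>" if "x \<in> T" for x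
  proof -
    have xS: "x \<in> S" using that assms by auto
    have "norm x \<le> R" "norm x0 \<le> R" using xS assms(3,4) by auto
    hence "norm (x - x0) \<le> 2 * R" using norm_triangle_ineq4[of x x0] by linarith
    hence p: "norm (x - x0) powr \<delta> \<le> (2*R) powr \<delta>" using assms(5) by (simp add: powr_mono2)
    have "norm (f x - f x0) \<le> hol \<delta> S f * norm (x - x0) powr \<delta>"
      using hol_le[OF assms(1) xS assms(3)] .
    also have "\<dots> \<le> \<bar>hol \<delta> S f\<bar> * (2*R) powr \<delta>"
      by (meson abs_ge_self abs_ge_zero order.trans mult_mono p powr_ge_zero mult_right_mono)
    finally show ?thesis using norm_triangle_ineq2[of "f x" "f x0"] by linarith
  qed
  thus ?thesis by (intro bdd_aboveI2) auto
qed

lemma norm_fst_le': "norm (fst z) \<le> norm z"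
  by (metis norm_fst_le prod.collapse)
lemma norm_snd_le': "norm (snd z) \<le> norm z"
  by (metis norm_snd_le prod.collapse)

lemma deriv_unique_cball:
  fixes f :: "'a::euclidean_space \<Rightarrow> 'b::real_normed_vector"
  assumes R: "0 < R" and x: "x \<in> cball 0 R"
    and d1: "(f has_derivative f1) (at x within cball 0 R)"
    and d2: "(f has_derivative f2) (at x within cball 0 R)"
  shows "f1 = f2"
proof -
  define L where "L u = f1 u - f2 u" for u
  have "((\<lambda>y. f y - f y) has_derivative (\<lambda>u. f1 u - f2 u)) (at x within cball 0 R)"
    using has_derivative_diff[OF d1 d2] .
  hence dz: "((\<lambda>y. 0) has_derivative L) (at x within cball 0 R)" unfolding L_def by simp
  hence bl: "bounded_linear L" and lim: "\<forall>e>0. \<exists>d>0. \<forall>x'\<in>cball 0 R. 0 < norm (x' - x) \<and> norm (x' - x) < d \<longrightarrow>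
      norm (0 - 0 - L (x' - x)) / norm (x' - x) < e"
    unfolding has_derivative_within' by auto
  interpret L: bounded_linear L by (rule bl)
  have Lz: "L (z - x) = 0" if z: "z \<in> ball 0 R" for z
  proof (rule ccontr)
    assume ne: "L (z - x) \<noteq> 0"
    hence zx: "z \<noteq> x" by auto
    define e where "e = norm (L (z - x)) / norm (z - x)"
    have e: "e > 0" using ne zx unfolding e_def by simp
    obtain d where d: "d > 0" and dd: "\<forall>x'\<in>cball 0 R. 0 < norm (x' - x) \<and> norm (x' - x) < d \<longrightarrow>
      norm (0 - 0 - L (x' - x)) / norm (x' - x) < e" using lim e by blast
    define t where "t = min (1/2) (d / (2 * norm (z - x)))"
    have nz: "norm (z - x) > 0" using zx by simp
    have t0: "t > 0" "t \<le> 1/2" using d nz unfolding t_def by auto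
    have td: "t * norm (z - x) < d"
    proof -
      have "t * norm (z - x) \<le> d / (2 * norm (z - x)) * norm (z - x)"
        unfolding t_def using nz by (intro mult_right_mono) auto
      also have "\<dots> = d/2" using nz by simp
      finally show ?thesis using d by linarith
    qed
    define x' where "x' = x + t *\<^sub>R (z - x)"
    have "x' = (1 - t) *\<^sub>R x + t *\<^sub>R z" unfolding x'_def by (simp add: algebra_simps)
    hence "norm x' \<le> (1 - t) * norm x + t * norm z"
      using t0 norm_triangle_ineq[of "(1 - t) *\<^sub>R x" "t *\<^sub>R z"] by simp
    also have "\<dots> \<le> (1 - t) * R + t * R"
      using x z t0 by (intro add_mono mult_left_mono) auto
    finally have x'in: "x' \<in> cball 0 R" by (simp add: algebra_simps)
    have nx: "norm (x' - x) = t * norm (z - x)" unfolding x'_def using t0 by simp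
    have pos: "0 < norm (x' - x)" using nx t0 nz by simp
    have td': "norm (x' - x) < d" using td nx by simp
    have "norm (0 - 0 - L (x' - x)) / norm (x' - x) < e"
      using dd x'in pos td' by blast
    moreover have "norm (0 - 0 - L (x' - x)) / norm (x' - x) = e"
      unfolding nx unfolding x'_def e_def using t0 nz by (simp add: L.scale)
    ultimately show False by simp
  qed
  have Lx: "L x = 0" using Lz[of 0] R by (simp add: L.neg)
  have "L u = 0" for u
  proof -
    define s where "s = R / (2 * (norm u + 1))"
    have s: "s > 0" proof -
      have "0 < norm u + 1" by (simp add: add_nonneg_pos)
      hence "0 < 2 * (norm u + 1)" by simp
      thus ?thesis using R unfolding s_def by simp
    qed
    have "norm (s *\<^sub>R u) = s * norm u" using s by simp
    also have "\<dots> < R"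
    proof -
      have d: "0 < 2*(norm u + 1)" by (simp add: add_nonneg_pos)
      have "norm u < 2*(norm u + 1)" using norm_ge_zero[of u] by (smt (verit))
      hence a: "norm u / (2*(norm u + 1)) < 1" using d by (subst divide_less_eq_1_pos) auto
      have "s * norm u = R * (norm u / (2*(norm u + 1)))" unfolding s_def by simp
      also have "\<dots> < R * 1" using mult_strict_left_mono[OF a R] .
      finally show ?thesis by simp
    qed
    finally have "L (s *\<^sub>R u - x) = 0" using Lz by simp
    hence "s *\<^sub>R L u = 0" using Lx by (simp add: L.diff L.scale)
    thus ?thesis using s by simp
  qed
  thus ?thesis unfolding L_def by auto
qed

lemma dfun_eq_at:
  fixes f g :: "'a::euclidean_space \<Rightarrow> 'b::real_normed_vector"
  assumes R: "0 < R" and v: "v \<in> cball 0 R" and d: "(f has_derivative f') (at v)"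
    and eq: "\<And>x. x \<in> cball 0 R \<Longrightarrow> g x = f x"
  shows "dfun (cball 0 R) g v = Blinfun f'" "g differentiable (at v within cball 0 R)"
proof -
  have dg: "(g has_derivative f') (at v within cball 0 R)"
    using has_derivative_transform[OF v eq has_derivative_at_withinI[OF d]] by auto
  thus dif: "g differentiable (at v within cball 0 R)" unfolding differentiable_def by blast
  have "frechet_derivative g (at v within cball 0 R) = f'"
    using deriv_unique_cball[OF R v _ dg] dif frechet_derivative_works by blast
  thus "dfun (cball 0 R) g v = Blinfun f'" unfolding dfun_def by simp
qed




locale ops =
  fixes D1 :: "'a::euclidean_space \<Rightarrow> 'a" and D2 :: "'b::euclidean_space \<Rightarrow> 'b" and c \<epsilon> :: real
  assumes D1lin: "linear D1" and D1bij: "bij D1" and D1inv: "\<And>y. norm (inv D1 y) \<le> c * norm y"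
    and D2lin: "linear D2" and D2b: "\<And>y. norm (D2 y) \<le> c * norm y"
    and c_pos: "0 < c" and eps_pos: "0 < \<epsilon>" and m1: "1 \<le> 1/c - 2*\<epsilon>"
begin

definition m where "m = 1/c - 2*\<epsilon>"

lemma m_ge1: "1 \<le> m" using m1 unfolding m_def .
lemma m_pos: "0 < m" using m_ge1 by simp

definition Aop :: "('a \<Rightarrow>\<^sub>L 'b) \<Rightarrow> (('a \<times> 'b) \<Rightarrow>\<^sub>L ('a \<times> 'b)) \<Rightarrow> 'a \<Rightarrow> 'a" where
  "Aop M N x = D1 x + fst (blinfun_apply N (x, blinfun_apply M x))"
definition Bop :: "('a \<Rightarrow>\<^sub>L 'b) \<Rightarrow> (('a \<times> 'b) \<Rightarrow>\<^sub>L ('a \<times> 'b)) \<Rightarrow> 'a \<Rightarrow> 'b" where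
  "Bop M N x = D2 (blinfun_apply M x) + snd (blinfun_apply N (x, blinfun_apply M x))"
definition Top :: "('a \<Rightarrow>\<^sub>L 'b) \<Rightarrow> (('a \<times> 'b) \<Rightarrow>\<^sub>L ('a \<times> 'b)) \<Rightarrow> 'a \<Rightarrow> 'b" where
  "Top M N = Bop M N \<circ> inv (Aop M N)"

lemma D1_lower: "norm x \<le> c * norm (D1 x)"
proof -
  have "inv D1 (D1 x) = x" using D1bij by (simp add: bij_is_inj)
  thus ?thesis using D1inv[of "D1 x"] by simp
qed

lemma D1_inv_right: "D1 (inv D1 y) = y"
  using D1bij by (simp add: bij_is_surj surj_f_inv_f)

lemma N_pair: "norm M \<le> 1 \<Longrightarrow> norm (blinfun_apply N (x, blinfun_apply M x)) \<le> 2 * norm N * norm x"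
proof -
  assume M: "norm M \<le> 1"
  have "norm (x, blinfun_apply M x) \<le> norm x + norm (blinfun_apply M x)" by (rule norm_Pair_le)
  also have "\<dots> \<le> norm x + norm M * norm x" using norm_blinfun by (intro add_left_mono) auto
  also have "\<dots> \<le> 2 * norm x" using mult_right_mono[OF M norm_ge_zero[of x]] by simp
  finally have p: "norm (x, blinfun_apply M x) \<le> 2 * norm x" .
  have "norm (blinfun_apply N (x, blinfun_apply M x)) \<le> norm N * norm (x, blinfun_apply M x)" by (rule norm_blinfun)
  also have "\<dots> \<le> norm N * (2 * norm x)" using p by (intro mult_left_mono) auto
  finally show ?thesis by simp
qed

lemma A_linear: "linear (Aop M N)"
proof -
  have e1: "(x + y, blinfun_apply M x + blinfun_apply M y) = (x, blinfun_apply M x) + (y, blinfun_apply M y)" for x y by simp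
  have e2: "(r *\<^sub>R x, r *\<^sub>R blinfun_apply M x) = r *\<^sub>R (x, blinfun_apply M x)" for r x by simp
  show ?thesis unfolding linear_iff Aop_def
    by (auto simp: linear_add[OF D1lin] linear_scale[OF D1lin] blinfun.add_right blinfun.scaleR_right
      e1 e2 scaleR_add_right simp del: add_Pair scaleR_Pair)
qed

lemma B_linear: "linear (Bop M N)"
proof -
  have e1: "(x + y, blinfun_apply M x + blinfun_apply M y) = (x, blinfun_apply M x) + (y, blinfun_apply M y)" for x y by simp
  have e2: "(r *\<^sub>R x, r *\<^sub>R blinfun_apply M x) = r *\<^sub>R (x, blinfun_apply M x)" for r x by simp
  show ?thesis unfolding linear_iff Bop_def
    by (auto simp: linear_add[OF D2lin] linear_scale[OF D2lin] blinfun.add_right blinfun.scaleR_right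
      e1 e2 scaleR_add_right simp del: add_Pair scaleR_Pair)
qed

lemma A_lower:
  assumes "norm M \<le> 1" "norm N \<le> \<epsilon>"
  shows "m * norm x \<le> norm (Aop M N x)"
proof -
  have "norm x / c \<le> norm (D1 x)" using D1_lower[of x] c_pos by (simp add: divide_le_eq mult.commute)
  moreover have "norm (fst (blinfun_apply N (x, blinfun_apply M x))) \<le> 2 * \<epsilon> * norm x"
    using N_pair[OF assms(1), of N x] norm_fst_le'[of "blinfun_apply N (x, blinfun_apply M x)"] assms(2)
    by (smt (verit) mult_right_mono norm_ge_zero)
  moreover have "norm (Aop M N x) \<ge> norm (D1 x) - norm (fst (blinfun_apply N (x, blinfun_apply M x)))"
    unfolding Aop_def by (metis norm_diff_ineq norm_minus_commute diff_minus_eq_add)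
  ultimately show ?thesis unfolding m_def by (simp add: algebra_simps)
qed

lemma A_inj: assumes "norm M \<le> 1" "norm N \<le> \<epsilon>" shows "inj (Aop M N)"
proof -
  interpret l: linear "Aop M N" by (rule A_linear)
  show ?thesis unfolding inj_on_def
  proof (intro ballI impI)
    fix x y assume "Aop M N x = Aop M N y"
    hence "Aop M N (x - y) = 0" by (simp add: l.diff)
    hence "m * norm (x - y) \<le> 0" using A_lower[OF assms, of "x - y"] by simp
    thus "x = y" using m_pos by (simp add: mult_le_0_iff)
  qed
qed

lemma A_bij: assumes "norm M \<le> 1" "norm N \<le> \<epsilon>" shows "bij (Aop M N)"
  using A_inj[OF assms] linear_inj_imp_surj[OF A_linear A_inj[OF assms]] by (simp add: bij_def)

lemma A_inv_right: assumes "norm M \<le> 1" "norm N \<le> \<epsilon>" shows "Aop M N (inv (Aop M N) y) = y"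
  using A_bij[OF assms] by (simp add: bij_is_surj surj_f_inv_f)

lemma A_inv_left: assumes "norm M \<le> 1" "norm N \<le> \<epsilon>" shows "inv (Aop M N) (Aop M N x) = x"
  using A_inj[OF assms] by simp

lemma A_inv_linear: assumes "norm M \<le> 1" "norm N \<le> \<epsilon>" shows "linear (inv (Aop M N))"
  using inj_linear_imp_inv_linear[OF A_linear A_inj[OF assms]] .

lemma A_inv_bound: assumes "norm M \<le> 1" "norm N \<le> \<epsilon>" shows "norm (inv (Aop M N) y) \<le> norm y / m"
  using A_lower[OF assms, of "inv (Aop M N) y"] A_inv_right[OF assms, of y] m_pos
  by (simp add: le_divide_eq mult.commute)

lemma B_bound: assumes "norm M \<le> 1"
  shows "norm (Bop M N x) \<le> (c * norm M + 2 * norm N) * norm x"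
proof -
  have "norm (D2 (blinfun_apply M x)) \<le> c * (norm M * norm x)"
    using D2b[of "blinfun_apply M x"] norm_blinfun[of M x] c_pos by (smt (verit) mult_left_mono)
  moreover have "norm (snd (blinfun_apply N (x, blinfun_apply M x))) \<le> 2 * norm N * norm x"
    using N_pair[OF assms, of N x] norm_snd_le'[of "blinfun_apply N (x, blinfun_apply M x)"] by linarith
  ultimately show ?thesis unfolding Bop_def using norm_triangle_ineq[of "D2 (blinfun_apply M x)" "snd (blinfun_apply N (x, blinfun_apply M x))"]
    by (simp add: algebra_simps)
qed

lemma T_linear: assumes "norm M \<le> 1" "norm N \<le> \<epsilon>" shows "linear (Top M N)"
  unfolding Top_def using linear_compose[OF A_inv_linear[OF assms] B_linear] .

lemma T_bounded_linear: assumes "norm M \<le> 1" "norm N \<le> \<epsilon>" shows "bounded_linear (Top M N)"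
  using T_linear[OF assms] linear_conv_bounded_linear by blast

lemma T_bound: assumes "norm M \<le> 1" "norm N \<le> \<epsilon>"
  shows "norm (Top M N y) \<le> (c * norm M + 2 * norm N) / m * norm y"
proof -
  have "norm (Top M N y) \<le> (c * norm M + 2 * norm N) * norm (inv (Aop M N) y)"
    unfolding Top_def using B_bound[OF assms(1)] by simp
  also have "\<dots> \<le> (c * norm M + 2 * norm N) * (norm y / m)"
    using A_inv_bound[OF assms] c_pos by (intro mult_left_mono) auto
  finally show ?thesis by simp
qed

lemma T_A: assumes "norm M \<le> 1" "norm N \<le> \<epsilon>" shows "Top M N (Aop M N x) = Bop M N x"
  unfolding Top_def using A_inv_left[OF assms] by simp

lemma diff_pair:
  fixes M M' :: "'a \<Rightarrow>\<^sub>L 'b" and N N' :: "('a \<times> 'b) \<Rightarrow>\<^sub>L ('a \<times> 'b)"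
  assumes "norm M \<le> 1" "norm N' \<le> \<epsilon>"
  shows "norm (blinfun_apply N (x, blinfun_apply M x) - blinfun_apply N' (x, blinfun_apply M' x)) \<le> (2 * norm (N - N') + \<epsilon> * norm (M - M')) * norm x"
proof -
  have eq: "blinfun_apply N (x, blinfun_apply M x) - blinfun_apply N' (x, blinfun_apply M' x) = blinfun_apply (N - N') (x, blinfun_apply M x) + blinfun_apply N' (0, blinfun_apply (M - M') x)"
  proof -
    have "blinfun_apply N' (x, blinfun_apply M x) - blinfun_apply N' (x, blinfun_apply M' x) = blinfun_apply N' ((x, blinfun_apply M x) - (x, blinfun_apply M' x))" by (simp only: blinfun.diff_right)
    also have "(x, blinfun_apply M x) - (x, blinfun_apply M' x) = (0, blinfun_apply (M - M') x)" by (simp add: blinfun.diff_left)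
    finally show ?thesis by (simp add: blinfun.diff_left algebra_simps)
  qed
  have 1: "norm (blinfun_apply (N - N') (x, blinfun_apply M x)) \<le> 2 * norm (N - N') * norm x" by (rule N_pair[OF assms(1)])
  have "norm (blinfun_apply N' (0, blinfun_apply (M - M') x)) \<le> norm N' * norm (0::'a, blinfun_apply (M - M') x)" using norm_blinfun by blast
  also have "norm (0::'a, blinfun_apply (M - M') x) = norm (blinfun_apply (M - M') x)" by (simp add: norm_Pair)
  also have "norm N' * norm (blinfun_apply (M - M') x) \<le> \<epsilon> * (norm (M - M') * norm x)"
    using assms(2) norm_blinfun[of "M - M'" x] eps_pos by (intro mult_mono) auto
  finally have 2: "norm (blinfun_apply N' (0, blinfun_apply (M - M') x)) \<le> \<epsilon> * norm (M - M') * norm x" by simp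
  show ?thesis unfolding eq using norm_triangle_ineq[of "blinfun_apply (N - N') (x, blinfun_apply M x)" "blinfun_apply N' (0, blinfun_apply (M - M') x)"] 1 2
    by (simp add: algebra_simps)
qed

lemma T_diff:
  assumes M: "norm M \<le> 1" "norm N \<le> \<epsilon>" and M': "norm M' \<le> 1" "norm N' \<le> \<epsilon>"
    and t: "0 \<le> t'" "\<And>z. norm (Top M' N' z) \<le> t' * norm z"
  shows "norm (Top M N y - Top M' N' y) \<le>
     ((c + \<epsilon>) * norm (M - M') + 2 * norm (N - N') + t' * (\<epsilon> * norm (M - M') + 2 * norm (N - N'))) / m * norm y"
proof -
  define x where "x = inv (Aop M N) y"
  have y: "y = Aop M N x" unfolding x_def using A_inv_right[OF M] by simp
  have Ty: "Top M N y = Bop M N x" unfolding y using T_A[OF M] .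
  interpret T': linear "Top M' N'" by (rule T_linear[OF M'])
  have "Top M' N' y = Top M' N' (Aop M' N' x) + Top M' N' (Aop M N x - Aop M' N' x)"
    unfolding y by (simp add: T'.add[symmetric])
  hence T'y: "Top M' N' y = Bop M' N' x + Top M' N' (Aop M N x - Aop M' N' x)" using T_A[OF M'] by simp
  let ?d = "blinfun_apply N (x, blinfun_apply M x) - blinfun_apply N' (x, blinfun_apply M' x)"
  have dp: "norm ?d \<le> (2 * norm (N - N') + \<epsilon> * norm (M - M')) * norm x"
    by (rule diff_pair[OF M(1) M'(2)])
  have "Aop M N x - Aop M' N' x = fst ?d" unfolding Aop_def by simp
  hence dA: "norm (Aop M N x - Aop M' N' x) \<le> (2 * norm (N - N') + \<epsilon> * norm (M - M')) * norm x"
    using dp norm_fst_le'[of ?d] by simp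
  have "Bop M N x - Bop M' N' x = D2 (blinfun_apply (M - M') x) + snd ?d"
    unfolding Bop_def by (simp add: linear_diff[OF D2lin, symmetric] blinfun.diff_left)
  hence "norm (Bop M N x - Bop M' N' x) \<le> norm (D2 (blinfun_apply (M - M') x)) + norm (snd ?d)"
    by (simp add: norm_triangle_ineq)
  moreover have "norm (D2 (blinfun_apply (M - M') x)) \<le> c * (norm (M - M') * norm x)"
    using D2b[of "blinfun_apply (M - M') x"] norm_blinfun[of "M - M'" x] c_pos by (smt (verit) mult_left_mono)
  moreover have "norm (snd ?d) \<le> (2 * norm (N - N') + \<epsilon> * norm (M - M')) * norm x"
    using dp norm_snd_le'[of ?d] by simp
  ultimately have dB: "norm (Bop M N x - Bop M' N' x) \<le> (c * norm (M - M') + 2 * norm (N - N') + \<epsilon> * norm (M - M')) * norm x"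
    by (simp add: algebra_simps)
  have "norm (Top M N y - Top M' N' y) = norm ((Bop M N x - Bop M' N' x) - Top M' N' (Aop M N x - Aop M' N' x))"
    unfolding Ty T'y by (simp add: algebra_simps)
  also have "\<dots> \<le> norm (Bop M N x - Bop M' N' x) + norm (Top M' N' (Aop M N x - Aop M' N' x))"
    by (rule norm_triangle_ineq4)
  also have "\<dots> \<le> (c * norm (M - M') + 2 * norm (N - N') + \<epsilon> * norm (M - M')) * norm x
      + t' * ((2 * norm (N - N') + \<epsilon> * norm (M - M')) * norm x)"
    using dB t(2)[of "Aop M N x - Aop M' N' x"] mult_left_mono[OF dA t(1)] by linarith
  also have "\<dots> = ((c + \<epsilon>) * norm (M - M') + 2 * norm (N - N') + t' * (\<epsilon> * norm (M - M') + 2 * norm (N - N'))) * norm x"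
    by (simp add: algebra_simps)
  also have "\<dots> \<le> ((c + \<epsilon>) * norm (M - M') + 2 * norm (N - N') + t' * (\<epsilon> * norm (M - M') + 2 * norm (N - N'))) * (norm y / m)"
    unfolding x_def using A_inv_bound[OF M, of y] c_pos eps_pos t(1)
    by (intro mult_left_mono) auto
  finally show ?thesis by simp
qed

end


locale GT = ops D1 D2 c \<epsilon> for D1 :: "'a::euclidean_space \<Rightarrow> 'a" and D2 :: "'b::euclidean_space \<Rightarrow> 'b"
  and c \<epsilon> :: real +
  fixes \<delta> r p \<eta> pt \<eta>t k :: real and H :: "'a \<times> 'b \<Rightarrow> 'a \<times> 'b"
  assumes \<delta>0: "0 < \<delta>" and \<delta>1: "\<delta> < 1" and c1: "c < 1" and eps_small: "\<epsilon> \<le> 1/100"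
    and r0: "0 < r" and r\<delta>: "2 * r powr \<delta> < \<epsilon>"
    and \<eta>0: "0 < \<eta>" and \<eta>p: "\<eta> \<le> p" and pr: "p \<le> r / 2"
    and \<eta>t0: "0 < \<eta>t" and \<eta>tpt: "\<eta>t \<le> pt" and ptp: "pt \<le> exp \<epsilon> * p" and \<eta>t\<eta>: "exp (-\<epsilon>) \<le> \<eta>t / \<eta>"
    and HC: "C1delta_on \<delta> (cball 0 r) H" and H0: "norm (H 0) < \<epsilon> * \<eta>"
    and Hd: "\<forall>t\<in>{\<eta>..2*p}. c0norm (cball 0 t) (dfun (cball 0 r) H) < \<epsilon> * t powr \<delta>"
    and Hh: "hol \<delta> (cball 0 r) (dfun (cball 0 r) H) < \<epsilon>"
    and S3: "c * (exp (2*\<epsilon>) + 4*\<epsilon>) \<le> 1"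
    and S4: "(c + 2*\<epsilon>)/2 + 10*\<epsilon> \<le> (1/c - 2*\<epsilon>)/2"
    and S5: "c * (1/2 + (2*\<epsilon>) powr \<delta> / 2) + 2*\<epsilon> \<le> exp (-\<epsilon>) * (1/c - 2*\<epsilon>) / 2"
    and S6: "c/1000 + 4*\<epsilon> \<le> exp (-\<epsilon>) / 1000"
    and S7: "c + 4*\<epsilon> \<le> k"
    and S8: "c + 2*\<epsilon> \<le> k * (1/c - 2*\<epsilon>)"
    and S9: "(c + 2*\<epsilon>) * \<epsilon> powr \<delta> / 2 + 8*\<epsilon> \<le> k * (1/c - 2*\<epsilon>)"
begin

lemma p0: "0 < p" using \<eta>0 \<eta>p by simp
lemma pt0: "0 < pt" using \<eta>t0 \<eta>tpt by simp

definition dH where "dH X = dfun (cball 0 r) H X"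

lemma H_deriv: "X \<in> cball 0 r \<Longrightarrow> (H has_derivative blinfun_apply (dH X)) (at X within cball 0 r)"
  unfolding dH_def by (rule C1_has_derivative[OF HC])

lemma H_deriv_at: "norm X < r \<Longrightarrow> (H has_derivative blinfun_apply (dH X)) (at X)"
proof -
  assume "norm X < r"
  hence X: "X \<in> ball 0 r" by simp
  have "(H has_derivative blinfun_apply (dH X)) (at X within ball 0 r)"
    using has_derivative_subset[OF H_deriv] X by auto
  thus ?thesis using at_within_open[OF X open_ball] by simp
qed

lemma Hhq: "bdd_above (hol_quots \<delta> (cball 0 r) (dfun (cball 0 r) H))"
  using HC unfolding C1delta_on_def by (rule conjunct2)

lemma dH_c0: assumes "t \<in> {\<eta>..2*p}" "X \<in> cball 0 t" shows "norm (dH X) \<le> \<epsilon> * t powr \<delta>"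
proof -
  have tr: "cball (0::'a\<times>'b) t \<subseteq> cball 0 r" using assms(1) pr by auto
  have "bdd_above ((\<lambda>x. norm (dfun (cball 0 r) H x)) ` cball 0 t)"
    using hol_bdd_c0[OF Hhq tr _ order_refl \<delta>0] r0 by (metis centre_in_cball less_imp_le)
  hence "norm (dH X) \<le> c0norm (cball 0 t) (dfun (cball 0 r) H)"
    unfolding dH_def using assms(2) by (rule c0_upper)
  thus ?thesis using Hd assms(1) by fastforce
qed

lemma rpow_small: "r powr \<delta> \<le> \<epsilon>/2" using r\<delta> by simp

lemma dH_2p: assumes "X \<in> cball 0 (2*p)" shows "norm (dH X) \<le> \<epsilon>"
proof -
  have "norm (dH X) \<le> \<epsilon> * (2*p) powr \<delta>" using dH_c0[OF _ assms] \<eta>p p0 by simp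
  also have "(2*p) powr \<delta> \<le> r powr \<delta>" using pr p0 \<delta>0 by (intro powr_mono2) auto
  hence "\<epsilon> * (2*p) powr \<delta> \<le> \<epsilon> * (\<epsilon>/2)" using rpow_small eps_pos
    by (meson mult_left_mono order.trans less_imp_le)
  also have "\<dots> \<le> \<epsilon>" using eps_pos eps_small by (simp add: mult_le_cancel_left1)
  finally show ?thesis by simp
qed

lemma dH_eta: assumes "X \<in> cball 0 \<eta>" shows "norm (dH X) \<le> \<epsilon> * \<eta> powr \<delta>"
  using dH_c0[OF _ assms] \<eta>p \<eta>0 by simp

lemma dH_hol: assumes "X \<in> cball 0 r" "Y \<in> cball 0 r"
  shows "norm (dH X - dH Y) \<le> \<epsilon> * norm (X - Y) powr \<delta>"
proof -
  have "norm (dH X - dH Y) \<le> hol \<delta> (cball 0 r) (dfun (cball 0 r) H) * norm (X - Y) powr \<delta>"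
    unfolding dH_def by (rule hol_le[OF Hhq assms])
  also have "\<dots> \<le> \<epsilon> * norm (X - Y) powr \<delta>" using Hh by (intro mult_right_mono) auto
  finally show ?thesis .
qed

lemma H_lip: assumes "X \<in> cball 0 (2*p)" "Y \<in> cball 0 (2*p)"
  shows "norm (H X - H Y) \<le> \<epsilon> * norm (X - Y)"
proof (rule differentiable_bound[OF convex_cball _ _ assms])
  fix Z assume Z: "Z \<in> cball (0::'a\<times>'b) (2*p)"
  have "cball (0::'a\<times>'b) (2*p) \<subseteq> cball 0 r" using pr by auto
  thus "(H has_derivative blinfun_apply (dH Z)) (at Z within cball 0 (2*p))"
    using H_deriv Z by (meson has_derivative_subset subsetD)
  show "onorm (blinfun_apply (dH Z)) \<le> \<epsilon>" using dH_2p[OF Z] by (simp add: norm_blinfun.rep_eq)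
qed

lemma invD1_lin: "linear (inv D1)"
  using inj_linear_imp_inv_linear[OF D1lin] D1bij by (simp add: bij_is_inj)

lemma tenth: "(10::real) powr (-3) = 1/1000"
  by (simp add: powr_minus powr_realpow)

end


context GT begin

definition dG :: "('a \<Rightarrow> 'b) \<Rightarrow> 'a \<Rightarrow> ('a \<Rightarrow>\<^sub>L 'b)" where "dG G w = dfun (cball 0 p) G w"
definition phi :: "('a \<Rightarrow> 'b) \<Rightarrow> 'a \<Rightarrow> 'a" where "phi G w = D1 w + fst (H (w, G w))"
definition psi :: "('a \<Rightarrow> 'b) \<Rightarrow> 'a \<Rightarrow> 'b" where "psi G w = D2 (G w) + snd (H (w, G w))"
definition R where "R = exp (2*\<epsilon>) * p"
definition winv :: "('a \<Rightarrow> 'b) \<Rightarrow> 'a \<Rightarrow> 'a" where "winv G v = (THE w. w \<in> cball 0 p \<and> phi G w = v)"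
definition Gt :: "('a \<Rightarrow> 'b) \<Rightarrow> 'a \<Rightarrow> 'b" where "Gt G v = psi G (winv G v)"
definition TT :: "('a \<Rightarrow> 'b) \<Rightarrow> 'a \<Rightarrow> 'a \<Rightarrow> 'b" where
  "TT G v = Top (dG G (winv G v)) (dH (winv G v, G (winv G v)))"
definition s0 where "s0 G = c0norm (cball 0 p) (dG G)"
definition beta where "beta G = hol \<delta> (cball 0 p) (dG G)"

lemma dG_fun: "dG G = dfun (cball 0 p) G" by (rule ext) (simp add: dG_def)

lemma pt_R: "pt < R"
proof -
  have "exp \<epsilon> * p < exp (2*\<epsilon>) * p" using eps_pos p0 by (intro mult_strict_right_mono) auto
  thus ?thesis using ptp unfolding R_def by simp
qed

lemma pR: "p \<le> R" unfolding R_def using eps_pos p0 by (simp add: mult_le_cancel_right1)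

lemma m_cancel: "m * a \<le> b \<Longrightarrow> 0 \<le> a \<Longrightarrow> a \<le> b"
  using mult_right_mono[OF m_ge1, of a] by simp

context
  fixes G :: "'a \<Rightarrow> 'b"
  assumes adm: "adm_fun \<delta> p \<eta> G"
begin

lemma G_C1: "C1delta_on \<delta> (cball 0 p) G" using adm unfolding adm_fun_def by simp

lemma G_0: "norm (G 0) \<le> \<eta>/1000" using adm unfolding adm_fun_def tenth by simp

lemma dG_0: "norm (dG G 0) \<le> 1/2 * \<eta> powr \<delta>" using adm unfolding adm_fun_def dG_def by simp

lemma G_hq: "bdd_above (hol_quots \<delta> (cball 0 p) (dG G))"
  using G_C1 unfolding C1delta_on_def dG_fun by (rule conjunct2)

lemma G_c0bdd: "bdd_above ((\<lambda>x. norm (dG G x)) ` cball 0 p)"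
  using hol_bdd_c0[OF G_hq order_refl _ order_refl \<delta>0] p0 by (metis centre_in_cball less_imp_le)

lemma dG_s0: "w \<in> cball 0 p \<Longrightarrow> norm (dG G w) \<le> s0 G"
  unfolding s0_def by (rule c0_upper[OF G_c0bdd])

lemma dG_hol: "w \<in> cball 0 p \<Longrightarrow> w' \<in> cball 0 p \<Longrightarrow> norm (dG G w - dG G w') \<le> beta G * norm (w - w') powr \<delta>"
  unfolding beta_def by (rule hol_le[OF G_hq])

lemma s0beta: "0 \<le> s0 G" "0 \<le> beta G" "s0 G + beta G \<le> 1/2"
proof -
  show "0 \<le> s0 G" using dG_s0[of 0] p0 by (smt (verit) centre_in_cball norm_ge_zero)
  obtain x :: 'a where x: "norm x = p" using vector_choose_size p0 by (meson less_imp_le)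
  have "x \<in> cball 0 p" "(0::'a) \<in> cball 0 p" "x \<noteq> 0" using x p0 by auto
  thus "0 \<le> beta G" unfolding beta_def using hol_nonneg[OF G_hq] by blast
  show "s0 G + beta G \<le> 1/2" using adm unfolding adm_fun_def s0_def beta_def dG_fun by simp
qed

lemma dG_half: "w \<in> cball 0 p \<Longrightarrow> norm (dG G w) \<le> 1/2"
  using dG_s0 s0beta by fastforce

lemma dG_le1: "w \<in> cball 0 p \<Longrightarrow> norm (dG G w) \<le> 1"
  using dG_half by fastforce

lemma G_deriv: "w \<in> cball 0 p \<Longrightarrow> (G has_derivative blinfun_apply (dG G w)) (at w within cball 0 p)"
  unfolding dG_def by (rule C1_has_derivative[OF G_C1])

lemma G_deriv_at: "norm w < p \<Longrightarrow> (G has_derivative blinfun_apply (dG G w)) (at w)"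
proof -
  assume "norm w < p"
  hence X: "w \<in> ball 0 p" by simp
  have "(G has_derivative blinfun_apply (dG G w)) (at w within ball 0 p)"
    using has_derivative_subset[OF G_deriv] X by auto
  thus ?thesis using at_within_open[OF X open_ball] by simp
qed

lemma G_lip: assumes "w \<in> cball 0 p" "w' \<in> cball 0 p" shows "norm (G w - G w') \<le> 1/2 * norm (w - w')"
proof (rule differentiable_bound[OF convex_cball _ _ assms])
  fix x assume x: "x \<in> cball (0::'a) p"
  show "(G has_derivative blinfun_apply (dG G x)) (at x within cball 0 p)" by (rule G_deriv[OF x])
  show "onorm (blinfun_apply (dG G x)) \<le> 1/2" using dG_half[OF x] by (simp add: norm_blinfun.rep_eq)
qed

lemma G_bnd: assumes "w \<in> cball 0 p" shows "norm (G w) \<le> \<eta>/1000 + norm w / 2"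
proof -
  have z: "(0::'a) \<in> cball 0 p" using p0 by simp
  have "norm (G w - G 0) \<le> 1/2 * norm (w - 0)" using G_lip[OF assms z] by simp
  thus ?thesis using G_0 norm_triangle_ineq2[of "G w" "G 0"] by simp
qed

lemma gr_norm: assumes "w \<in> cball 0 p" shows "norm (w, G w) \<le> 3/2 * norm w + \<eta>/1000"
  using norm_Pair_le[of w "G w"] G_bnd[OF assms] by simp

lemma gr_2p: assumes "w \<in> cball 0 p" shows "(w, G w) \<in> cball 0 (2*p)" "norm (w, G w) < r"
proof -
  have "norm w \<le> p" using assms by simp
  hence a: "norm (w, G w) \<le> 3/2 * p + p/1000" using gr_norm[OF assms] \<eta>p by simp
  thus "(w, G w) \<in> cball 0 (2*p)" using p0 by simp
  show "norm (w, G w) < r" using a p0 pr by simp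
qed

lemma gr_diff: assumes "w \<in> cball 0 p" "w' \<in> cball 0 p"
  shows "norm ((w, G w) - (w', G w')) \<le> 3/2 * norm (w - w')"
proof -
  have "norm ((w, G w) - (w', G w')) = norm (w - w', G w - G w')" by simp
  also have "\<dots> \<le> norm (w - w') + norm (G w - G w')" by (rule norm_Pair_le)
  finally show ?thesis using G_lip[OF assms] by simp
qed

lemma HG_lip: assumes "w \<in> cball 0 p" "w' \<in> cball 0 p"
  shows "norm (H (w, G w) - H (w', G w')) \<le> 2 * \<epsilon> * norm (w - w')"
proof -
  have "norm (H (w, G w) - H (w', G w')) \<le> \<epsilon> * norm ((w, G w) - (w', G w'))"
    by (rule H_lip[OF gr_2p(1)[OF assms(1)] gr_2p(1)[OF assms(2)]])
  also have "\<dots> \<le> \<epsilon> * (3/2 * norm (w - w'))" using gr_diff[OF assms] eps_pos by (intro mult_left_mono) auto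
  also have "\<dots> \<le> 2 * \<epsilon> * norm (w - w')" using eps_pos by (simp add: mult_right_mono)
  finally show ?thesis .
qed

lemma K0: "norm (H (0, G 0)) \<le> 2 * \<epsilon> * \<eta>"
proof -
  have z: "(0::'a\<times>'b) \<in> cball 0 (2*p)" using p0 by simp
  have "norm (H (0, G 0) - H 0) \<le> \<epsilon> * norm ((0, G 0) - 0)"
    using H_lip[OF gr_2p(1)[of 0] z] p0 by simp
  also have "norm ((0::'a, G 0) - 0) = norm (G 0)" by (simp add: norm_Pair)
  finally have "norm (H (0, G 0) - H 0) \<le> \<epsilon> * (\<eta>/1000)"
    using G_0 eps_pos by (meson mult_left_mono order.trans less_imp_le)
  hence "norm (H (0, G 0)) \<le> \<epsilon> * \<eta> + \<epsilon> * (\<eta>/1000)"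
    using H0 norm_triangle_ineq2[of "H (0, G 0)" "H 0"] by linarith
  also have "\<dots> \<le> 2 * \<epsilon> * \<eta>" using eps_pos \<eta>0 by simp
  finally show ?thesis .
qed

lemma HG_bnd: assumes "w \<in> cball 0 p" shows "norm (H (w, G w)) \<le> 2 * \<epsilon> * \<eta> + 2 * \<epsilon> * norm w"
  using HG_lip[OF assms, of 0] K0 norm_triangle_ineq2[of "H (w, G w)" "H (0, G 0)"] p0 by simp

lemma phi_lower: assumes "w \<in> cball 0 p" "w' \<in> cball 0 p"
  shows "m * norm (w - w') \<le> norm (phi G w - phi G w')"
proof -
  have e: "phi G w - phi G w' = D1 (w - w') + fst (H (w, G w) - H (w', G w'))"
    unfolding phi_def by (simp add: linear_diff[OF D1lin])
  have "norm (w - w') / c \<le> norm (D1 (w - w'))" using D1_lower[of "w - w'"] c_pos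
    by (simp add: divide_le_eq mult.commute)
  moreover have "norm (fst (H (w, G w) - H (w', G w'))) \<le> 2 * \<epsilon> * norm (w - w')"
    using HG_lip[OF assms] norm_fst_le' order.trans by blast
  moreover have "norm (phi G w - phi G w') \<ge> norm (D1 (w - w')) - norm (fst (H (w, G w) - H (w', G w')))"
    unfolding e by (metis norm_diff_ineq norm_minus_commute diff_minus_eq_add)
  ultimately show ?thesis unfolding m_def by (simp add: algebra_simps)
qed

lemma phi_unique: assumes "w \<in> cball 0 p" "w' \<in> cball 0 p" "phi G w = phi G w'" shows "w = w'"
  using phi_lower[OF assms(1,2)] assms(3) m_pos by (simp add: mult_le_0_iff)

lemma phi_exists: assumes v: "v \<in> cball 0 R" shows "\<exists>w\<in>cball 0 p. phi G w = v"
proof -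
  define f where "f w = inv D1 (v - fst (H (w, G w)))" for w
  interpret iD: linear "inv D1" by (rule invD1_lin)
  have "\<exists>!w\<in>cball 0 p. f w = w"
  proof (rule Banach_fix)
    show "complete (cball (0::'a) p)" by (simp add: compact_imp_complete)
    show "cball (0::'a) p \<noteq> {}" using p0 by simp
    show "0 \<le> c * (2*\<epsilon>)" using c_pos eps_pos by simp
    show "c * (2*\<epsilon>) < 1"
    proof -
      have "c * (2*\<epsilon>) \<le> 1 * (2*\<epsilon>)" using c1 eps_pos by (intro mult_right_mono) auto
      thus ?thesis using eps_small by simp
    qed
    show "f ` cball 0 p \<subseteq> cball 0 p"
    proof
      fix y assume "y \<in> f ` cball 0 p"
      then obtain w where w: "w \<in> cball 0 p" and y: "y = f w" by blast
      have "norm y \<le> c * norm (v - fst (H (w, G w)))" unfolding y f_def by (rule D1inv)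
      also have "\<dots> \<le> c * (norm v + norm (H (w, G w)))"
        using c_pos norm_triangle_ineq4[of v "fst (H (w, G w))"] norm_fst_le'[of "H (w, G w)"]
        by (intro mult_left_mono) auto
      also have "\<dots> \<le> c * (R + (2 * \<epsilon> * \<eta> + 2 * \<epsilon> * p))"
      proof -
        have "2 * \<epsilon> * norm w \<le> 2 * \<epsilon> * p" using w eps_pos by (intro mult_left_mono) auto
        thus ?thesis using c_pos v HG_bnd[OF w] by (intro mult_left_mono add_mono) auto
      qed
      also have "\<dots> \<le> c * (R + 4 * \<epsilon> * p)"
        using c_pos eps_pos \<eta>p by (intro mult_left_mono) auto
      also have "\<dots> = c * (exp (2*\<epsilon>) + 4*\<epsilon>) * p" unfolding R_def by (simp add: algebra_simps)
      also have "\<dots> \<le> p" using S3 p0 by (simp add: mult_le_cancel_right1)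
      finally show "y \<in> cball 0 p" by simp
    qed
    fix x y :: 'a assume x: "x \<in> cball 0 p" and y: "y \<in> cball 0 p"
    have "f x - f y = inv D1 (fst (H (y, G y)) - fst (H (x, G x)))"
      unfolding f_def by (simp add: iD.diff[symmetric])
    hence "norm (f x - f y) \<le> c * norm (fst (H (y, G y) - H (x, G x)))" using D1inv by simp
    also have "\<dots> \<le> c * (2 * \<epsilon> * norm (y - x))"
      using HG_lip[OF y x] norm_fst_le' c_pos by (meson mult_left_mono order.trans less_imp_le)
    finally show "dist (f x) (f y) \<le> c * (2*\<epsilon>) * dist x y" by (simp add: dist_norm norm_minus_commute)
  qed
  then obtain w where w: "w \<in> cball 0 p" "f w = w" by blast
  hence "D1 w = v - fst (H (w, G w))" using D1_inv_right unfolding f_def by metis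
  hence "phi G w = v" unfolding phi_def by simp
  thus ?thesis using w by blast
qed

lemma winv: assumes "v \<in> cball 0 R" shows "winv G v \<in> cball 0 p" "phi G (winv G v) = v"
proof -
  have "\<exists>!w. w \<in> cball 0 p \<and> phi G w = v" using phi_exists[OF assms] phi_unique by blast
  from theI'[OF this] show "winv G v \<in> cball 0 p" "phi G (winv G v) = v" unfolding winv_def by auto
qed

lemma winv_eq: assumes "w \<in> cball 0 p" "phi G w = v" shows "winv G v = w"
  unfolding winv_def using assms phi_unique by (intro the_equality) auto

lemma winv_lip: assumes "v \<in> cball 0 R" "v' \<in> cball 0 R"
  shows "m * norm (winv G v - winv G v') \<le> norm (v - v')"
  using phi_lower[OF winv(1)[OF assms(1)] winv(1)[OF assms(2)]] winv(2)[OF assms(1)] winv(2)[OF assms(2)]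
  by simp

lemma winv_lip1: assumes "v \<in> cball 0 R" "v' \<in> cball 0 R"
  shows "norm (winv G v - winv G v') \<le> norm (v - v')"
  using m_cancel[OF winv_lip[OF assms]] by simp

lemma winv_int: assumes "norm v < R" shows "norm (winv G v) < p"
proof -
  have v: "v \<in> cball 0 R" using assms by simp
  define w where "w = winv G v"
  have w: "w \<in> cball 0 p" "phi G w = v" using winv[OF v] unfolding w_def by auto
  have "D1 w = v - fst (H (w, G w))" using w(2) unfolding phi_def by (simp add: algebra_simps)
  hence "norm w \<le> c * norm (v - fst (H (w, G w)))" using D1_lower[of w] by simp
  also have "\<dots> \<le> c * (norm v + norm (H (w, G w)))"
    using c_pos norm_triangle_ineq4[of v "fst (H (w, G w))"] norm_fst_le'[of "H (w, G w)"]
    by (intro mult_left_mono) auto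
  also have "\<dots> \<le> c * (norm v + (2 * \<epsilon> * \<eta> + 2 * \<epsilon> * p))"
  proof -
    have "2 * \<epsilon> * norm w \<le> 2 * \<epsilon> * p" using w eps_pos by (intro mult_left_mono) auto
    thus ?thesis using c_pos HG_bnd[OF w(1)] by (intro mult_left_mono add_mono) auto
  qed
  also have "\<dots> \<le> c * (norm v + 4 * \<epsilon> * p)"
    using c_pos eps_pos \<eta>p by (intro mult_left_mono) auto
  also have "\<dots> < c * (R + 4 * \<epsilon> * p)" using assms c_pos by simp
  also have "\<dots> = c * (exp (2*\<epsilon>) + 4*\<epsilon>) * p" unfolding R_def by (simp add: algebra_simps)
  also have "\<dots> \<le> p" using S3 p0 by (simp add: mult_le_cancel_right1)
  finally show ?thesis unfolding w_def .
qed

lemma winv_0: "norm (winv G 0) \<le> 2 * \<epsilon> * \<eta>"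
proof -
  have z: "(0::'a) \<in> cball 0 R" using pR p0 by simp
  have z': "(0::'a) \<in> cball 0 p" using p0 by simp
  have "m * norm (winv G 0 - 0) \<le> norm (phi G (winv G 0) - phi G 0)"
    by (rule phi_lower[OF winv(1)[OF z] z'])
  also have "\<dots> = norm (fst (H (0, G 0)))" using winv(2)[OF z] unfolding phi_def by (simp add: linear_0[OF D1lin])
  also have "\<dots> \<le> 2 * \<epsilon> * \<eta>" using K0 norm_fst_le' order.trans by blast
  finally have "m * norm (winv G 0) \<le> 2 * \<epsilon> * \<eta>" by simp
  thus ?thesis using m_cancel by simp
qed

end
end


context GT begin

definition Fm :: "'a \<times> 'b \<Rightarrow> 'a \<times> 'b" where "Fm z = (D1 (fst z), D2 (snd z)) + H z"

lemma S4m: "c + 22*\<epsilon> \<le> m"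
proof -
  have "(c+2*\<epsilon>)/2 + 10*\<epsilon> \<le> m/2" using S4 unfolding m_def .
  thus ?thesis by (simp add: field_simps)
qed
lemma S5m: "c * (1/2 + (2*\<epsilon>) powr \<delta> / 2) + 2*\<epsilon> \<le> exp (-\<epsilon>) * m / 2"
  using S5 unfolding m_def .
lemma S8m: "c + 2*\<epsilon> \<le> k * m" using S8 unfolding m_def .
lemma S9m: "(c + 2*\<epsilon>) * \<epsilon> powr \<delta> / 2 + 8*\<epsilon> \<le> k * m" using S9 unfolding m_def .

lemma D2_bl: "bounded_linear D2" using D2lin linear_conv_bounded_linear by blast

context
  fixes G :: "'a \<Rightarrow> 'b"
  assumes adm: "adm_fun \<delta> p \<eta> G"
begin

lemma gr_deriv_at: "norm w < p \<Longrightarrow> ((\<lambda>w. (w, G w)) has_derivative (\<lambda>x. (x, blinfun_apply (dG G w) x))) (at w)"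
  by (rule has_derivative_Pair[OF has_derivative_ident G_deriv_at[OF adm]])

lemma HG_deriv_at: assumes "norm w < p"
  shows "((\<lambda>w. H (w, G w)) has_derivative (\<lambda>x. blinfun_apply (dH (w, G w)) (x, blinfun_apply (dG G w) x))) (at w)"
proof -
  have w: "w \<in> cball 0 p" using assms by simp
  show ?thesis using has_derivative_compose[OF gr_deriv_at[OF assms] H_deriv_at[OF gr_2p(2)[OF adm w]]] .
qed

lemma phi_deriv: assumes "norm w < p"
  shows "(phi G has_derivative Aop (dG G w) (dH (w, G w))) (at w)"
proof -
  have "((\<lambda>w. D1 w + fst (H (w, G w))) has_derivative
     (\<lambda>x. D1 x + fst (blinfun_apply (dH (w, G w)) (x, blinfun_apply (dG G w) x)))) (at w)"
    by (intro has_derivative_add linear_imp_has_derivative[OF D1lin] has_derivative_fst[OF HG_deriv_at[OF assms]])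
  thus ?thesis unfolding phi_def[abs_def] Aop_def[abs_def] .
qed

lemma psi_deriv: assumes "norm w < p"
  shows "(psi G has_derivative Bop (dG G w) (dH (w, G w))) (at w)"
proof -
  have "((\<lambda>w. D2 (G w) + snd (H (w, G w))) has_derivative
     (\<lambda>x. D2 (blinfun_apply (dG G w) x) + snd (blinfun_apply (dH (w, G w)) (x, blinfun_apply (dG G w) x)))) (at w)"
    by (intro has_derivative_add bounded_linear.has_derivative[OF D2_bl G_deriv_at[OF adm assms]]
        has_derivative_snd[OF HG_deriv_at[OF assms]])
  thus ?thesis unfolding psi_def[abs_def] Bop_def[abs_def] .
qed

lemma MN: assumes "v \<in> cball 0 R"
  shows "norm (dG G (winv G v)) \<le> 1" "norm (dH (winv G v, G (winv G v))) \<le> \<epsilon>"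
    "norm (dG G (winv G v)) \<le> s0 G"
  using dG_le1[OF adm winv(1)[OF adm assms]] dH_2p[OF gr_2p(1)[OF adm winv(1)[OF adm assms]]]
    dG_s0[OF adm winv(1)[OF adm assms]] by auto

lemma winv_cont: "continuous_on (cball 0 R) (winv G)"
proof (rule lipschitz_on_continuous_on)
  show "1-lipschitz_on (cball 0 R) (winv G)"
    by (rule lipschitz_onI) (auto simp: dist_norm intro: winv_lip1[OF adm])
qed

lemma winv_deriv: assumes v: "norm v < R"
  shows "(winv G has_derivative inv (Aop (dG G (winv G v)) (dH (winv G v, G (winv G v))))) (at v)"
proof -
  have vc: "v \<in> cball 0 R" using v by simp
  note MN' = MN(1,2)[OF vc]
  show ?thesis
  proof (rule has_derivative_inverse_basic[where f = "phi G" and T = "ball 0 R"])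
    show "(phi G has_derivative Aop (dG G (winv G v)) (dH (winv G v, G (winv G v)))) (at (winv G v))"
      by (rule phi_deriv[OF winv_int[OF adm v]])
    show "bounded_linear (inv (Aop (dG G (winv G v)) (dH (winv G v, G (winv G v)))))"
      using A_inv_linear[OF MN'] linear_conv_bounded_linear by blast
    show "inv (Aop (dG G (winv G v)) (dH (winv G v, G (winv G v)))) \<circ> Aop (dG G (winv G v)) (dH (winv G v, G (winv G v))) = id"
      using A_inv_left[OF MN'] by (simp add: fun_eq_iff)
    show "continuous (at v) (winv G)"
      using continuous_on_interior[OF winv_cont] v by simp
    show "open (ball (0::'a) R)" by simp
    show "v \<in> ball 0 R" using v by simp
    show "\<And>z. z \<in> ball 0 R \<Longrightarrow> phi G (winv G z) = z" using winv(2)[OF adm] by simp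
  qed
qed

lemma Gt_deriv: assumes v: "norm v < R" shows "(Gt G has_derivative TT G v) (at v)"
proof -
  have "((\<lambda>v. psi G (winv G v)) has_derivative
      (\<lambda>x. Bop (dG G (winv G v)) (dH (winv G v, G (winv G v))) (inv (Aop (dG G (winv G v)) (dH (winv G v, G (winv G v)))) x))) (at v)"
    using has_derivative_compose[OF winv_deriv[OF v] psi_deriv[OF winv_int[OF adm v]]] .
  thus ?thesis unfolding Gt_def[abs_def] TT_def Top_def comp_def .
qed

lemma TT_bl: "v \<in> cball 0 R \<Longrightarrow> bounded_linear (TT G v)"
  unfolding TT_def using T_bounded_linear MN(1,2) by blast

lemma TT_bound: assumes "v \<in> cball 0 R"
  shows "norm (TT G v y) \<le> (c * norm (dG G (winv G v)) + 2 * norm (dH (winv G v, G (winv G v)))) / m * norm y"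
  unfolding TT_def by (rule T_bound[OF MN(1,2)[OF assms]])

lemma dfun_Gt:
  assumes v: "v \<in> cball 0 pt" and eq: "\<And>x. x \<in> cball 0 pt \<Longrightarrow> G' x = Gt G x"
  shows "dfun (cball 0 pt) G' v = Blinfun (TT G v)" "G' differentiable (at v within cball 0 pt)"
proof -
  have "norm v < R" using v pt_R by simp
  note d = Gt_deriv[OF this]
  show "dfun (cball 0 pt) G' v = Blinfun (TT G v)" by (rule dfun_eq_at(1)[OF pt0 v d eq])
  show "G' differentiable (at v within cball 0 pt)" by (rule dfun_eq_at(2)[OF pt0 v d eq])
qed

lemma graph_sub: "graph_on pt (Gt G) \<subseteq> Fm ` graph_on p G"
proof
  fix z assume "z \<in> graph_on pt (Gt G)"
  then obtain v where v: "v \<in> cball 0 pt" and z: "z = (v, Gt G v)" unfolding graph_on_def by blast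
  have vR: "v \<in> cball 0 R" using v pt_R by simp
  have "z = Fm (winv G v, G (winv G v))"
    unfolding z Fm_def Gt_def psi_def using winv(2)[OF adm vR] unfolding phi_def by (simp add: prod_eq_iff)
  moreover have "(winv G v, G (winv G v)) \<in> graph_on p G" unfolding graph_on_def using winv(1)[OF adm vR] by blast
  ultimately show "z \<in> Fm ` graph_on p G" by blast
qed

lemma graph_eq: assumes sub: "graph_on pt G' \<subseteq> Fm ` graph_on p G" and v: "v \<in> cball 0 pt"
  shows "G' v = Gt G v"
proof -
  have "(v, G' v) \<in> Fm ` graph_on p G" using sub v unfolding graph_on_def by blast
  then obtain w where w: "w \<in> cball 0 p" and e: "(v, G' v) = Fm (w, G w)" unfolding graph_on_def by blast
  have "phi G w = v" "G' v = psi G w"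
    using arg_cong[OF e, of fst] arg_cong[OF e, of snd] unfolding Fm_def phi_def psi_def by simp_all
  moreover have "winv G v = w" using winv_eq[OF adm w] calculation(1) by simp
  ultimately show ?thesis unfolding Gt_def by simp
qed

end

lemma TT_diff:
  assumes adm1: "adm_fun \<delta> p \<eta> G1" and adm2: "adm_fun \<delta> p \<eta> G2"
    and v1: "v1 \<in> cball 0 R" and v2: "v2 \<in> cball 0 R"
  shows "norm (Blinfun (TT G1 v1) - Blinfun (TT G2 v2)) \<le>
    ((c + 2*\<epsilon>) * norm (dG G1 (winv G1 v1) - dG G2 (winv G2 v2))
      + 4 * norm (dH (winv G1 v1, G1 (winv G1 v1)) - dH (winv G2 v2, G2 (winv G2 v2)))) / m"
proof (rule norm_blinfun_bound)
  define M1 where "M1 = dG G1 (winv G1 v1)"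
  define M2 where "M2 = dG G2 (winv G2 v2)"
  define N1 where "N1 = dH (winv G1 v1, G1 (winv G1 v1))"
  define N2 where "N2 = dH (winv G2 v2, G2 (winv G2 v2))"
  have b1: "norm M1 \<le> 1" "norm N1 \<le> \<epsilon>" using MN[OF adm1 v1] unfolding M1_def N1_def by auto
  have b2: "norm M2 \<le> 1" "norm N2 \<le> \<epsilon>" "norm M2 \<le> 1/2" using MN[OF adm2 v2]
      dG_half[OF adm2 winv(1)[OF adm2 v2]] unfolding M2_def N2_def by auto
  define t' where "t' = (c * norm M2 + 2 * norm N2) / m"
  have t'0: "0 \<le> t'" unfolding t'_def using c_pos m_pos by simp
  have t'1: "t' \<le> 1"
  proof -
    have "c * norm M2 + 2 * norm N2 \<le> c * 1 + 2 * \<epsilon>" using b2 c_pos by (intro add_mono mult_left_mono) auto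
    also have "\<dots> \<le> m" using S4m eps_pos by simp
    finally show ?thesis unfolding t'_def using m_pos by simp
  qed
  have tb: "norm (Top M2 N2 z) \<le> t' * norm z" for z unfolding t'_def by (rule T_bound[OF b2(1,2)])
  let ?\<mu> = "norm (M1 - M2)" and ?\<nu> = "norm (N1 - N2)"
  show "0 \<le> ((c + 2*\<epsilon>) * norm (dG G1 (winv G1 v1) - dG G2 (winv G2 v2))
      + 4 * norm (dH (winv G1 v1, G1 (winv G1 v1)) - dH (winv G2 v2, G2 (winv G2 v2)))) / m"
    using c_pos eps_pos m_pos by simp
  fix y
  have bl1: "bounded_linear (TT G1 v1)" by (rule TT_bl[OF adm1 v1])
  have bl2: "bounded_linear (TT G2 v2)" by (rule TT_bl[OF adm2 v2])
  have "blinfun_apply (Blinfun (TT G1 v1) - Blinfun (TT G2 v2)) y = Top M1 N1 y - Top M2 N2 y"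
    unfolding blinfun.diff_left bounded_linear_Blinfun_apply[OF bl1] bounded_linear_Blinfun_apply[OF bl2]
    by (simp add: TT_def M1_def M2_def N1_def N2_def)
  moreover have "norm (Top M1 N1 y - Top M2 N2 y) \<le> ((c + \<epsilon>) * ?\<mu> + 2 * ?\<nu> + t' * (\<epsilon> * ?\<mu> + 2 * ?\<nu>)) / m * norm y"
    by (rule T_diff[OF b1 b2(1,2) t'0 tb])
  moreover have "((c + \<epsilon>) * ?\<mu> + 2 * ?\<nu> + t' * (\<epsilon> * ?\<mu> + 2 * ?\<nu>)) \<le> (c + 2*\<epsilon>) * ?\<mu> + 4 * ?\<nu>"
  proof -
    have "t' * (\<epsilon> * ?\<mu> + 2 * ?\<nu>) \<le> 1 * (\<epsilon> * ?\<mu> + 2 * ?\<nu>)"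
      using t'1 eps_pos by (intro mult_right_mono) auto
    thus ?thesis by (simp add: algebra_simps)
  qed
  ultimately show "norm (blinfun_apply (Blinfun (TT G1 v1) - Blinfun (TT G2 v2)) y) \<le>
      ((c + 2*\<epsilon>) * norm (dG G1 (winv G1 v1) - dG G2 (winv G2 v2))
      + 4 * norm (dH (winv G1 v1, G1 (winv G1 v1)) - dH (winv G2 v2, G2 (winv G2 v2)))) / m * norm y"
    unfolding M1_def M2_def N1_def N2_def using m_pos
    by (smt (verit, best) divide_right_mono mult_right_mono norm_ge_zero)
qed

end


context GT begin

lemma \<eta>t_ge: "exp (-\<epsilon>) * \<eta> \<le> \<eta>t"
  using \<eta>t\<eta> \<eta>0 by (simp add: le_divide_eq)

lemma two_powr: "2 powr \<delta> \<le> (2::real)"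
  using powr_mono[of \<delta> 1 2] \<delta>1 by simp

lemma powr_lin: assumes "0 \<le> x" "x \<le> a * y" "0 \<le> a" "a \<le> 2" "0 \<le> y"
  shows "x powr \<delta> \<le> 2 * y powr \<delta>"
proof -
  have "x powr \<delta> \<le> (a * y) powr \<delta>" using assms \<delta>0 by (intro powr_mono2) auto
  also have "\<dots> = a powr \<delta> * y powr \<delta>" using assms by (simp add: powr_mult)
  also have "a powr \<delta> \<le> 2 powr \<delta>" using assms \<delta>0 by (intro powr_mono2) auto
  hence "a powr \<delta> * y powr \<delta> \<le> 2 * y powr \<delta>" using two_powr by (intro mult_right_mono) auto
  finally show ?thesis .
qed

lemma \<eta>t_powr: "exp (-\<epsilon>) * \<eta> powr \<delta> \<le> \<eta>t powr \<delta>"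
proof -
  have "exp (-\<epsilon>) \<le> exp (-\<epsilon>) powr \<delta>"
    unfolding exp_powr_real using eps_pos \<delta>1 \<delta>0 by (simp add: mult_le_cancel_left1)
  hence "exp (-\<epsilon>) * \<eta> powr \<delta> \<le> exp (-\<epsilon>) powr \<delta> * \<eta> powr \<delta>" by (intro mult_right_mono) auto
  also have "\<dots> = (exp (-\<epsilon>) * \<eta>) powr \<delta>" using \<eta>0 by (simp add: powr_mult)
  also have "\<dots> \<le> \<eta>t powr \<delta>" using \<eta>t_ge \<eta>0 \<delta>0 by (intro powr_mono2) auto
  finally show ?thesis .
qed

context
  fixes G :: "'a \<Rightarrow> 'b"
  assumes adm: "adm_fun \<delta> p \<eta> G"
begin

lemma w0: "winv G 0 \<in> cball 0 p" "norm (winv G 0) \<le> 2 * \<epsilon> * \<eta>"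
  using winv(1)[OF adm, of 0] pR p0 winv_0[OF adm] by auto

lemma Gt_AM1: "norm (Gt G 0) \<le> 10 powr (-3) * \<eta>t"
proof -
  define w where "w = winv G 0"
  have w: "w \<in> cball 0 p" "norm w \<le> 2 * \<epsilon> * \<eta>" using w0 unfolding w_def by auto
  have "norm (D2 (G w)) \<le> c * norm (G w)" by (rule D2b)
  also have "\<dots> \<le> c * (\<eta>/1000 + norm w / 2)" using G_bnd[OF adm w(1)] c_pos by (intro mult_left_mono) auto
  also have "\<dots> \<le> c * (\<eta>/1000 + \<epsilon> * \<eta>)" using w(2) c_pos by (intro mult_left_mono) auto
  also have "\<dots> \<le> c * \<eta>/1000 + \<epsilon> * \<eta>"
  proof -
    have "c * (\<epsilon> * \<eta>) \<le> 1 * (\<epsilon> * \<eta>)" using c1 eps_pos \<eta>0 by (intro mult_right_mono) auto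
    thus ?thesis by (simp add: algebra_simps)
  qed
  finally have a: "norm (D2 (G w)) \<le> c * \<eta>/1000 + \<epsilon> * \<eta>" .
  have "norm (H (w, G w)) \<le> 2 * \<epsilon> * \<eta> + 2 * \<epsilon> * norm w" by (rule HG_bnd[OF adm w(1)])
  also have "\<dots> \<le> 2 * \<epsilon> * \<eta> + 2 * \<epsilon> * (2 * \<epsilon> * \<eta>)" using w(2) eps_pos by (intro add_left_mono mult_left_mono) auto
  also have "\<dots> \<le> 3 * \<epsilon> * \<eta>"
  proof -
    have "4 * \<epsilon> * (\<epsilon> * \<eta>) \<le> 1 * (\<epsilon> * \<eta>)" using eps_small eps_pos \<eta>0 by (intro mult_right_mono) auto
    thus ?thesis by (simp add: algebra_simps)
  qed
  finally have b: "norm (snd (H (w, G w))) \<le> 3 * \<epsilon> * \<eta>" using norm_snd_le' order.trans by blast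
  have "norm (Gt G 0) \<le> norm (D2 (G w)) + norm (snd (H (w, G w)))"
    unfolding Gt_def psi_def w_def by (rule norm_triangle_ineq)
  also have "\<dots> \<le> (c/1000 + 4 * \<epsilon>) * \<eta>" using a b by (simp add: algebra_simps)
  also have "\<dots> \<le> exp (-\<epsilon>) / 1000 * \<eta>" using S6 \<eta>0 by (intro mult_right_mono) auto
  also have "\<dots> \<le> \<eta>t / 1000" using \<eta>t_ge by simp
  finally show ?thesis unfolding tenth by simp
qed

lemma dfun_Gt_self: "v \<in> cball 0 pt \<Longrightarrow> dfun (cball 0 pt) (Gt G) v = Blinfun (TT G v)"
  using dfun_Gt(1)[OF adm, of v "Gt G"] by simp

lemma Blinfun_TT_bound: assumes "v \<in> cball 0 R"
  shows "norm (Blinfun (TT G v)) \<le> (c * norm (dG G (winv G v)) + 2 * norm (dH (winv G v, G (winv G v)))) / m"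
  using TT_bound[OF adm assms] c_pos m_pos
  by (intro norm_blinfun_bound) (auto simp: bounded_linear_Blinfun_apply[OF TT_bl[OF adm assms]])

lemma Gt_AM2: "norm (dfun (cball 0 pt) (Gt G) 0) \<le> 1/2 * \<eta>t powr \<delta>"
proof -
  define w where "w = winv G 0"
  have w: "w \<in> cball 0 p" "norm w \<le> 2 * \<epsilon> * \<eta>" using w0 unfolding w_def by auto
  have z: "(0::'a) \<in> cball 0 p" using p0 by simp
  have "norm (dG G w - dG G 0) \<le> beta G * norm (w - 0) powr \<delta>" by (rule dG_hol[OF adm w(1) z])
  also have "\<dots> \<le> 1/2 * (2 * \<epsilon> * \<eta>) powr \<delta>"
    using s0beta[OF adm] w(2) \<delta>0 by (intro mult_mono powr_mono2) auto
  also have "(2 * \<epsilon> * \<eta>) powr \<delta> = (2*\<epsilon>) powr \<delta> * \<eta> powr \<delta>" using eps_pos \<eta>0 by (simp add: powr_mult)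
  finally have "norm (dG G w - dG G 0) \<le> 1/2 * ((2*\<epsilon>) powr \<delta> * \<eta> powr \<delta>)" .
  hence M: "norm (dG G w) \<le> (1/2 + (2*\<epsilon>) powr \<delta> / 2) * \<eta> powr \<delta>"
    using dG_0[OF adm] norm_triangle_ineq2[of "dG G w" "dG G 0"] by (simp add: algebra_simps)
  have "norm (w, G w) \<le> 3/2 * norm w + \<eta>/1000" by (rule gr_norm[OF adm w(1)])
  also have "\<dots> \<le> 3/2 * (2 * \<epsilon> * \<eta>) + \<eta>/1000" using w(2) by simp
  also have "\<dots> \<le> 3/100 * \<eta> + \<eta>/1000"
    using mult_right_mono[of "3*\<epsilon>" "3/100" \<eta>] eps_small \<eta>0 by (simp add: algebra_simps)
  also have "\<dots> \<le> \<eta>" using \<eta>0 by simp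
  finally have N: "norm (dH (w, G w)) \<le> \<epsilon> * \<eta> powr \<delta>" using dH_eta by simp
  have vR: "(0::'a) \<in> cball 0 R" using pR p0 by simp
  have "norm (dfun (cball 0 pt) (Gt G) 0) \<le> (c * norm (dG G w) + 2 * norm (dH (w, G w))) / m"
    using dfun_Gt_self[of 0] pt0 Blinfun_TT_bound[OF vR] unfolding w_def by simp
  also have "\<dots> \<le> (c * ((1/2 + (2*\<epsilon>) powr \<delta> / 2) * \<eta> powr \<delta>) + 2 * (\<epsilon> * \<eta> powr \<delta>)) / m"
    using M N c_pos m_pos by (intro divide_right_mono add_mono mult_left_mono) auto
  also have "\<dots> = (c * (1/2 + (2*\<epsilon>) powr \<delta> / 2) + 2*\<epsilon>) * \<eta> powr \<delta> / m" by (simp add: algebra_simps)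
  also have "\<dots> \<le> (exp (-\<epsilon>) * m / 2) * \<eta> powr \<delta> / m"
    using S5m m_pos by (intro divide_right_mono mult_right_mono) auto
  also have "\<dots> = 1/2 * (exp (-\<epsilon>) * \<eta> powr \<delta>)" using m_pos by simp
  also have "\<dots> \<le> 1/2 * \<eta>t powr \<delta>" using \<eta>t_powr by simp
  finally show ?thesis .
qed

lemma TT_hol: assumes v: "v \<in> cball 0 pt" and v': "v' \<in> cball 0 pt"
  shows "norm (Blinfun (TT G v) - Blinfun (TT G v')) \<le> ((c + 2*\<epsilon>) * beta G + 8*\<epsilon>) / m * norm (v - v') powr \<delta>"
proof -
  have vR: "v \<in> cball 0 R" "v' \<in> cball 0 R" using v v' pt_R by auto
  define w where "w = winv G v"
  define w' where "w' = winv G v'"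
  have w: "w \<in> cball 0 p" "w' \<in> cball 0 p" using winv(1)[OF adm] vR unfolding w_def w'_def by auto
  have ww: "norm (w - w') \<le> norm (v - v')" unfolding w_def w'_def by (rule winv_lip1[OF adm vR])
  have wwd: "norm (w - w') powr \<delta> \<le> norm (v - v') powr \<delta>" using ww \<delta>0 by (intro powr_mono2) auto
  have mu: "norm (dG G w - dG G w') \<le> beta G * norm (v - v') powr \<delta>"
    using dG_hol[OF adm w] wwd s0beta(2)[OF adm] by (meson mult_left_mono order.trans)
  have X: "(w, G w) \<in> cball 0 r" "(w', G w') \<in> cball 0 r"
    using less_imp_le[OF gr_2p(2)[OF adm w(1)]] less_imp_le[OF gr_2p(2)[OF adm w(2)]] by auto
  have "norm ((w, G w) - (w', G w')) \<le> 3/2 * norm (v - v')" using gr_diff[OF adm w] ww by simp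
  hence "norm ((w, G w) - (w', G w')) powr \<delta> \<le> 2 * norm (v - v') powr \<delta>"
    by (intro powr_lin[where a="3/2"]) auto
  hence nu: "norm (dH (w, G w) - dH (w', G w')) \<le> \<epsilon> * (2 * norm (v - v') powr \<delta>)"
    using dH_hol[OF X] eps_pos by (meson mult_left_mono order.trans less_imp_le)
  have "norm (Blinfun (TT G v) - Blinfun (TT G v')) \<le>
      ((c + 2*\<epsilon>) * norm (dG G w - dG G w') + 4 * norm (dH (w, G w) - dH (w', G w'))) / m"
    using TT_diff[OF adm adm vR] unfolding w_def w'_def .
  also have "\<dots> \<le> ((c + 2*\<epsilon>) * (beta G * norm (v - v') powr \<delta>) + 4 * (\<epsilon> * (2 * norm (v - v') powr \<delta>))) / m"
    using mu nu c_pos eps_pos m_pos by (intro divide_right_mono add_mono mult_left_mono) auto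
  also have "\<dots> = ((c + 2*\<epsilon>) * beta G + 8*\<epsilon>) / m * norm (v - v') powr \<delta>" by (simp add: algebra_simps)
  finally show ?thesis .
qed

lemma Gt_adm: "adm_fun \<delta> pt \<eta>t (Gt G)"
proof -
  obtain x :: 'a where x: "norm x = pt" using vector_choose_size pt0 by (meson less_imp_le)
  have pts: "x \<in> cball 0 pt" "(0::'a) \<in> cball 0 pt" "x \<noteq> 0" using x pt0 by auto
  define B where "B = ((c + 2*\<epsilon>) * beta G + 8*\<epsilon>) / m"
  have hq: "\<And>v v'. v \<in> cball 0 pt \<Longrightarrow> v' \<in> cball 0 pt \<Longrightarrow> v \<noteq> v' \<Longrightarrow>
      norm (dfun (cball 0 pt) (Gt G) v - dfun (cball 0 pt) (Gt G) v') \<le> B * norm (v - v') powr \<delta>"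
    unfolding B_def using TT_hol dfun_Gt_self by simp
  have hl: "bdd_above (hol_quots \<delta> (cball 0 pt) (dfun (cball 0 pt) (Gt G))) \<and>
      hol \<delta> (cball 0 pt) (dfun (cball 0 pt) (Gt G)) \<le> B"
    by (rule hol_least[OF hq pts])
  have c0: "c0norm (cball 0 pt) (dfun (cball 0 pt) (Gt G)) \<le> (c * s0 G + 2 * \<epsilon>) / m"
  proof (rule c0_least)
    show "cball (0::'a) pt \<noteq> {}" using pt0 by simp
    fix v :: 'a assume v: "v \<in> cball 0 pt"
    have vR: "v \<in> cball 0 R" using v pt_R by simp
    have "norm (dfun (cball 0 pt) (Gt G) v) \<le> (c * norm (dG G (winv G v)) + 2 * norm (dH (winv G v, G (winv G v)))) / m"
      using dfun_Gt_self[OF v] Blinfun_TT_bound[OF vR] by simp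
    also have "\<dots> \<le> (c * s0 G + 2 * \<epsilon>) / m"
      using MN(2,3)[OF adm vR] c_pos m_pos by (intro divide_right_mono add_mono mult_left_mono) auto
    finally show "norm (dfun (cball 0 pt) (Gt G) v) \<le> (c * s0 G + 2 * \<epsilon>) / m" .
  qed
  have sum: "(c * s0 G + 2 * \<epsilon>) / m + B \<le> 1/2"
  proof -
    have "c * s0 G + 2 * \<epsilon> + ((c + 2*\<epsilon>) * beta G + 8*\<epsilon>) \<le> (c + 2*\<epsilon>) * (s0 G + beta G) + 10 * \<epsilon>"
      using s0beta[OF adm] eps_pos by (simp add: algebra_simps)
    also have "\<dots> \<le> (c + 2*\<epsilon>) * (1/2) + 10 * \<epsilon>"
      using s0beta[OF adm] c_pos eps_pos by (intro add_right_mono mult_left_mono) auto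
    also have "\<dots> \<le> m / 2" using S4 unfolding m_def by simp
    finally have "c * s0 G + 2 * \<epsilon> + ((c + 2*\<epsilon>) * beta G + 8*\<epsilon>) \<le> m / 2" .
    hence "(c * s0 G + 2 * \<epsilon> + ((c + 2*\<epsilon>) * beta G + 8*\<epsilon>)) / m \<le> (m/2) / m"
      using m_pos by (intro divide_right_mono) auto
    thus ?thesis unfolding B_def using m_pos by (simp add: add_divide_distrib)
  qed
  have C1: "C1delta_on \<delta> (cball 0 pt) (Gt G)"
    unfolding C1delta_on_def using hl dfun_Gt(2)[OF adm, of _ "Gt G"] by simp
  have am3: "c0norm (cball 0 pt) (dfun (cball 0 pt) (Gt G)) + hol \<delta> (cball 0 pt) (dfun (cball 0 pt) (Gt G)) \<le> 1/2"
    using c0 hl sum by linarith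
  show ?thesis unfolding adm_fun_def
    using C1 Gt_AM1 Gt_AM2 am3 by blast
qed

end
end


context GT begin

lemma graph_same: assumes adm: "adm_fun \<delta> p \<eta> G" and sub: "graph_on pt G' \<subseteq> Fm ` graph_on p G"
  shows "graph_on pt G' = graph_on pt (Gt G)"
proof -
  have "\<And>v. v \<in> cball 0 pt \<Longrightarrow> G' v = Gt G v" using graph_eq[OF adm sub] by blast
  thus ?thesis unfolding graph_on_def by (metis (no_types, lifting))
qed

lemma part1: assumes adm: "adm_fun \<delta> p \<eta> G"
  shows "\<exists>!W. W \<in> Mu \<delta> pt \<eta>t \<and> W \<subseteq> Fm ` graph_on p G"
proof (rule ex1I)
  show "graph_on pt (Gt G) \<in> Mu \<delta> pt \<eta>t \<and> graph_on pt (Gt G) \<subseteq> Fm ` graph_on p G"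
    using Gt_adm[OF adm] graph_sub[OF adm] unfolding Mu_def by blast
  fix W assume W: "W \<in> Mu \<delta> pt \<eta>t \<and> W \<subseteq> Fm ` graph_on p G"
  then obtain G' where "W = graph_on pt G'" unfolding Mu_def by blast
  thus "W = graph_on pt (Gt G)" using graph_same[OF adm] W by blast
qed

context
  fixes G1 G2 :: "'a \<Rightarrow> 'b"
  assumes adm1: "adm_fun \<delta> p \<eta> G1" and adm2: "adm_fun \<delta> p \<eta> G2"
begin

definition "Dl = dC0 p G1 G2"
definition "Dl1 = c0norm (cball 0 p) (\<lambda>v. dG G1 v - dG G2 v)"

lemma Dl_upper: assumes w: "w \<in> cball 0 p" shows "norm (G1 w - G2 w) \<le> Dl"
proof -
  have "bdd_above ((\<lambda>x. norm (G1 x - G2 x)) ` cball 0 p)"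
  proof (rule bdd_aboveI2)
    fix x :: 'a assume x: "x \<in> cball 0 p"
    have "norm (G1 x - G2 x) \<le> norm (G1 x) + norm (G2 x)" by (rule norm_triangle_ineq4)
    also have "\<dots> \<le> (\<eta>/1000 + norm x/2) + (\<eta>/1000 + norm x/2)"
      using G_bnd[OF adm1 x] G_bnd[OF adm2 x] by (rule add_mono)
    finally show "norm (G1 x - G2 x) \<le> \<eta>/500 + p" using x by simp
  qed
  from c0_upper[OF this w] show ?thesis unfolding Dl_def dC0_def .
qed

lemma Dl_nonneg: "0 \<le> Dl" using Dl_upper[of 0] p0 by (smt (verit) centre_in_cball norm_ge_zero)

lemma Dl1_upper: assumes w: "w \<in> cball 0 p" shows "norm (dG G1 w - dG G2 w) \<le> Dl1"
proof -
  have "bdd_above ((\<lambda>x. norm (dG G1 x - dG G2 x)) ` cball 0 p)"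
  proof (rule bdd_aboveI2)
    fix x :: 'a assume x: "x \<in> cball 0 p"
    have "norm (dG G1 x - dG G2 x) \<le> norm (dG G1 x) + norm (dG G2 x)" by (rule norm_triangle_ineq4)
    also have "\<dots> \<le> 1 + 1" using dG_le1[OF adm1 x] dG_le1[OF adm2 x] by (rule add_mono)
    finally show "norm (dG G1 x - dG G2 x) \<le> 2" by simp
  qed
  from c0_upper[OF this w] show ?thesis unfolding Dl1_def .
qed

lemma dC1_p: "dC1 p G1 G2 = Dl + Dl1"
  unfolding dC1_def Dl_def Dl1_def dC0_def dG_fun ..

context
  fixes v :: 'a assumes v: "v \<in> cball 0 pt"
begin

lemma vR: "v \<in> cball 0 R" using v pt_R by simp

definition "w1 = winv G1 v"
definition "w2 = winv G2 v"

lemma w12: "w1 \<in> cball 0 p" "w2 \<in> cball 0 p" unfolding w1_def w2_def using winv(1)[OF adm1 vR] winv(1)[OF adm2 vR] by auto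

lemma ww: "norm (w1 - w2) \<le> \<epsilon> * Dl"
proof -
  have "m * norm (w1 - w2) \<le> norm (phi G2 w1 - phi G2 w2)" by (rule phi_lower[OF adm2 w12])
  also have "phi G2 w2 = phi G1 w1" unfolding w1_def w2_def using winv(2)[OF adm1 vR] winv(2)[OF adm2 vR] by simp
  also have "phi G2 w1 - phi G1 w1 = fst (H (w1, G2 w1) - H (w1, G1 w1))" unfolding phi_def by simp
  also have "norm (fst (H (w1, G2 w1) - H (w1, G1 w1))) \<le> \<epsilon> * norm ((w1, G2 w1) - (w1, G1 w1))"
    by (rule order.trans[OF norm_fst_le' H_lip[OF gr_2p(1)[OF adm2 w12(1)] gr_2p(1)[OF adm1 w12(1)]]])
  also have "norm ((w1, G2 w1) - (w1, G1 w1)) = norm (G1 w1 - G2 w1)"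
    by (simp add: norm_Pair norm_minus_commute)
  also have "\<epsilon> * norm (G1 w1 - G2 w1) \<le> \<epsilon> * Dl" using Dl_upper[OF w12(1)] eps_pos by simp
  finally show ?thesis using m_cancel by simp
qed

lemma gg: "norm (G1 w1 - G2 w2) \<le> Dl + \<epsilon> * Dl / 2"
proof -
  have "norm (G1 w1 - G2 w2) \<le> norm (G1 w1 - G2 w1) + norm (G2 w1 - G2 w2)"
    using norm_triangle_ineq[of "G1 w1 - G2 w1" "G2 w1 - G2 w2"] by simp
  also have "\<dots> \<le> Dl + 1/2 * norm (w1 - w2)" using Dl_upper[OF w12(1)] G_lip[OF adm2 w12] by simp
  finally show ?thesis using ww by simp
qed

lemma XX: "norm ((w1, G1 w1) - (w2, G2 w2)) \<le> 2 * Dl"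
proof -
  have "norm ((w1, G1 w1) - (w2, G2 w2)) = norm (w1 - w2, G1 w1 - G2 w2)" by simp
  also have "\<dots> \<le> norm (w1 - w2) + norm (G1 w1 - G2 w2)" by (rule norm_Pair_le)
  also have "\<dots> \<le> \<epsilon> * Dl + (Dl + \<epsilon> * Dl / 2)" using ww gg by simp
  also have "\<dots> \<le> 2 * Dl"
  proof -
    have "\<epsilon> * Dl \<le> 1/100 * Dl" using eps_small Dl_nonneg by (intro mult_right_mono) auto
    thus ?thesis using Dl_nonneg by linarith
  qed
  finally show ?thesis .
qed

lemma C0pt: "norm (Gt G1 v - Gt G2 v) \<le> (c + 4*\<epsilon>) * Dl"
proof -
  have e: "Gt G1 v - Gt G2 v = D2 (G1 w1 - G2 w2) + snd (H (w1, G1 w1) - H (w2, G2 w2))"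
    unfolding Gt_def psi_def w1_def w2_def by (simp add: linear_diff[OF D2lin])
  have "norm (D2 (G1 w1 - G2 w2)) \<le> c * (Dl + \<epsilon> * Dl / 2)"
    using D2b[of "G1 w1 - G2 w2"] gg c_pos by (meson mult_left_mono order.trans less_imp_le)
  also have "\<dots> \<le> c * Dl + \<epsilon> * Dl / 2"
  proof -
    have "c * (\<epsilon> * Dl / 2) \<le> 1 * (\<epsilon> * Dl / 2)" using c1 eps_pos Dl_nonneg by (intro mult_right_mono) auto
    moreover have "c * (Dl + \<epsilon> * Dl / 2) = c * Dl + c * (\<epsilon> * Dl / 2)" by (simp only: distrib_left)
    ultimately show ?thesis by linarith
  qed
  finally have a: "norm (D2 (G1 w1 - G2 w2)) \<le> c * Dl + \<epsilon> * Dl / 2" .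
  have "norm (H (w1, G1 w1) - H (w2, G2 w2)) \<le> \<epsilon> * norm ((w1, G1 w1) - (w2, G2 w2))"
    by (rule H_lip[OF gr_2p(1)[OF adm1 w12(1)] gr_2p(1)[OF adm2 w12(2)]])
  also have "\<dots> \<le> \<epsilon> * (2 * Dl)" using XX eps_pos by (intro mult_left_mono) auto
  finally have h: "norm (H (w1, G1 w1) - H (w2, G2 w2)) \<le> \<epsilon> * (2 * Dl)" .
  have b: "norm (snd (H (w1, G1 w1) - H (w2, G2 w2))) \<le> \<epsilon> * (2 * Dl)" by (rule order.trans[OF norm_snd_le' h])
  have "norm (Gt G1 v - Gt G2 v) \<le> c * Dl + \<epsilon> * Dl / 2 + \<epsilon> * (2 * Dl)"
    unfolding e using norm_triangle_ineq[of "D2 (G1 w1 - G2 w2)" "snd (H (w1, G1 w1) - H (w2, G2 w2))"] a b by simp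
  also have "\<dots> \<le> (c + 4*\<epsilon>) * Dl"
  proof -
    have q: "0 \<le> \<epsilon> * Dl" using eps_pos Dl_nonneg by simp
    have "(c + 4*\<epsilon>) * Dl = c * Dl + 4 * (\<epsilon> * Dl)" by (simp only: distrib_right mult.assoc)
    moreover have "\<epsilon> * (2 * Dl) = 2 * (\<epsilon> * Dl)" by simp
    ultimately show ?thesis using q by linarith
  qed
  finally show ?thesis .
qed

lemma C1pt: "norm (Blinfun (TT G1 v) - Blinfun (TT G2 v)) \<le> k * Dl1 + k * Dl powr \<delta>"
proof -
  have "norm (dG G1 w1 - dG G2 w2) \<le> norm (dG G1 w1 - dG G2 w1) + norm (dG G2 w1 - dG G2 w2)"
    using norm_triangle_ineq[of "dG G1 w1 - dG G2 w1" "dG G2 w1 - dG G2 w2"] by simp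
  also have "\<dots> \<le> Dl1 + beta G2 * norm (w1 - w2) powr \<delta>"
    using Dl1_upper[OF w12(1)] dG_hol[OF adm2 w12] by (rule add_mono)
  also have "beta G2 * norm (w1 - w2) powr \<delta> \<le> 1/2 * (\<epsilon> * Dl) powr \<delta>"
    using s0beta[OF adm2] ww \<delta>0 by (intro mult_mono powr_mono2) auto
  also have "(\<epsilon> * Dl) powr \<delta> = \<epsilon> powr \<delta> * Dl powr \<delta>" using eps_pos Dl_nonneg by (simp add: powr_mult)
  finally have mu: "norm (dG G1 w1 - dG G2 w2) \<le> Dl1 + 1/2 * (\<epsilon> powr \<delta> * Dl powr \<delta>)" by simp
  have X: "(w1, G1 w1) \<in> cball 0 r" "(w2, G2 w2) \<in> cball 0 r"
    using less_imp_le[OF gr_2p(2)[OF adm1 w12(1)]] less_imp_le[OF gr_2p(2)[OF adm2 w12(2)]] by auto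
  have "norm ((w1, G1 w1) - (w2, G2 w2)) powr \<delta> \<le> 2 * Dl powr \<delta>"
    using XX Dl_nonneg by (intro powr_lin[where a=2]) auto
  hence nu: "norm (dH (w1, G1 w1) - dH (w2, G2 w2)) \<le> \<epsilon> * (2 * Dl powr \<delta>)"
    using dH_hol[OF X] eps_pos by (meson mult_left_mono order.trans less_imp_le)
  have "norm (Blinfun (TT G1 v) - Blinfun (TT G2 v)) \<le>
      ((c + 2*\<epsilon>) * norm (dG G1 w1 - dG G2 w2) + 4 * norm (dH (w1, G1 w1) - dH (w2, G2 w2))) / m"
    using TT_diff[OF adm1 adm2 vR vR] unfolding w1_def w2_def .
  also have "\<dots> \<le> ((c + 2*\<epsilon>) * (Dl1 + 1/2 * (\<epsilon> powr \<delta> * Dl powr \<delta>)) + 4 * (\<epsilon> * (2 * Dl powr \<delta>))) / m"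
    using mu nu c_pos eps_pos m_pos by (intro divide_right_mono add_mono mult_left_mono) auto
  also have "\<dots> = ((c + 2*\<epsilon>) * Dl1 + ((c + 2*\<epsilon>) * \<epsilon> powr \<delta> / 2 + 8*\<epsilon>) * Dl powr \<delta>) / m"
    by (simp add: algebra_simps)
  also have "\<dots> \<le> ((k * m) * Dl1 + (k * m) * Dl powr \<delta>) / m"
  proof -
    have "0 \<le> Dl1" using Dl1_upper[of 0] p0 by (smt (verit) centre_in_cball norm_ge_zero)
    thus ?thesis using S8m S9m m_pos by (intro divide_right_mono add_mono mult_right_mono) auto
  qed
  also have "\<dots> = k * Dl1 + k * Dl powr \<delta>" using m_pos by (simp add: field_simps)
  finally show ?thesis .
qed

end

lemma part2:
  assumes sub1: "graph_on pt Gt1 \<subseteq> Fm ` graph_on p G1" and sub2: "graph_on pt Gt2 \<subseteq> Fm ` graph_on p G2"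
  shows "dC0 pt Gt1 Gt2 \<le> k * dC0 p G1 G2 \<and> dC1 pt Gt1 Gt2 \<le> k * (dC1 p G1 G2 + dC0 p G1 G2 powr \<delta>)"
proof -
  have ne: "cball (0::'a) pt \<noteq> {}" using pt0 by simp
  have e1: "\<And>v. v \<in> cball 0 pt \<Longrightarrow> Gt1 v = Gt G1 v" using graph_eq[OF adm1 sub1] by blast
  have e2: "\<And>v. v \<in> cball 0 pt \<Longrightarrow> Gt2 v = Gt G2 v" using graph_eq[OF adm2 sub2] by blast
  have a: "dC0 pt Gt1 Gt2 \<le> (c + 4*\<epsilon>) * Dl"
    unfolding dC0_def
  proof (rule c0_least[OF ne])
    fix v :: 'a assume v: "v \<in> cball 0 pt"
    show "norm (Gt1 v - Gt2 v) \<le> (c + 4*\<epsilon>) * Dl" using C0pt[OF v] e1[OF v] e2[OF v] by simp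
  qed
  have b: "c0norm (cball 0 pt) (\<lambda>v. dfun (cball 0 pt) Gt1 v - dfun (cball 0 pt) Gt2 v) \<le> k * Dl1 + k * Dl powr \<delta>"
  proof (rule c0_least[OF ne])
    fix v :: 'a assume v: "v \<in> cball 0 pt"
    have "dfun (cball 0 pt) Gt1 v = Blinfun (TT G1 v)" using dfun_Gt(1)[OF adm1 v e1] .
    moreover have "dfun (cball 0 pt) Gt2 v = Blinfun (TT G2 v)" using dfun_Gt(1)[OF adm2 v e2] .
    ultimately show "norm (dfun (cball 0 pt) Gt1 v - dfun (cball 0 pt) Gt2 v) \<le> k * Dl1 + k * Dl powr \<delta>"
      using C1pt[OF v] by simp
  qed
  have k: "c + 4*\<epsilon> \<le> k" by (rule S7)
  have a': "dC0 pt Gt1 Gt2 \<le> k * Dl" using a mult_right_mono[OF k Dl_nonneg] by linarith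
  have "dC1 pt Gt1 Gt2 = dC0 pt Gt1 Gt2 + c0norm (cball 0 pt) (\<lambda>v. dfun (cball 0 pt) Gt1 v - dfun (cball 0 pt) Gt2 v)"
    unfolding dC1_def dC0_def ..
  also have "\<dots> \<le> k * Dl + (k * Dl1 + k * Dl powr \<delta>)" using a' b by linarith
  also have "\<dots> = k * (dC1 p G1 G2 + dC0 p G1 G2 powr \<delta>)" unfolding dC1_p Dl_def[symmetric]
    by (simp add: algebra_simps)
  finally show ?thesis using a' unfolding Dl_def by simp
qed

end
end


lemma ev_le:
  fixes f g :: "real \<Rightarrow> real"
  assumes "(f \<longlongrightarrow> a) (at_right 0)" "(g \<longlongrightarrow> b) (at_right 0)" "a < b"
  shows "\<forall>\<^sub>F x in at_right 0. f x \<le> g x"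
proof -
  have "((\<lambda>x. g x - f x) \<longlongrightarrow> b - a) (at_right 0)" by (intro tendsto_diff assms)
  moreover have "0 < b - a" using assms(3) by simp
  ultimately have "\<forall>\<^sub>F x in at_right 0. 0 < g x - f x" by (rule order_tendstoD(1))
  thus ?thesis by (rule eventually_mono) simp
qed

lemma conds:
  fixes \<delta> c k :: real
  assumes \<delta>: "0 < \<delta>" and c: "0 < c" "c < 1" and k: "c < k" "c * c < k"
  shows "\<exists>\<epsilon>0>0. \<forall>\<epsilon>. 0 < \<epsilon> \<and> \<epsilon> < \<epsilon>0 \<longrightarrow>
    \<epsilon> \<le> 1/100 \<and> 1 \<le> 1/c - 2*\<epsilon> \<and>
    c * (exp (2*\<epsilon>) + 4*\<epsilon>) \<le> 1 \<and>
    (c + 2*\<epsilon>)/2 + 10*\<epsilon> \<le> (1/c - 2*\<epsilon>)/2 \<and>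
    c * (1/2 + (2*\<epsilon>) powr \<delta> / 2) + 2*\<epsilon> \<le> exp (-\<epsilon>) * (1/c - 2*\<epsilon>) / 2 \<and>
    c/1000 + 4*\<epsilon> \<le> exp (-\<epsilon>) / 1000 \<and>
    c + 4*\<epsilon> \<le> k \<and>
    c + 2*\<epsilon> \<le> k * (1/c - 2*\<epsilon>) \<and>
    (c + 2*\<epsilon>) * \<epsilon> powr \<delta> / 2 + 8*\<epsilon> \<le> k * (1/c - 2*\<epsilon>)"
proof -
  have pos: "\<forall>\<^sub>F x in at_right (0::real). 0 \<le> x" using eventually_at_right_less[of 0]
    by (rule eventually_mono) simp
  have id0: "((\<lambda>x::real. x) \<longlongrightarrow> 0) (at_right 0)" by simp
  have pw1: "((\<lambda>x::real. (2*x) powr \<delta>) \<longlongrightarrow> 0) (at_right 0)"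
  proof (rule tendsto_zero_powrI)
    show "((\<lambda>x::real. 2*x) \<longlongrightarrow> 0) (at_right 0)" using tendsto_mult[OF tendsto_const id0, of 2] by simp
    show "\<forall>\<^sub>F x in at_right (0::real). 0 \<le> 2*x" using pos by (rule eventually_mono) simp
  qed (use \<delta> in auto)
  have pw2: "((\<lambda>x::real. x powr \<delta>) \<longlongrightarrow> 0) (at_right 0)"
    by (rule tendsto_zero_powrI[OF id0 tendsto_const pos \<delta>])
  have cc: "c < 1/c" using c by (simp add: field_simps) (smt (verit) mult_less_cancel_left2)
  have e0: "\<forall>\<^sub>F x in at_right 0. x \<le> (1::real)/100"
    by (rule ev_le[OF id0 tendsto_const]) simp
  have e1: "\<forall>\<^sub>F x in at_right 0. 1 \<le> 1/c - 2*x"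
  proof (rule ev_le[OF tendsto_const])
    show "((\<lambda>x::real. 1/c - 2*x) \<longlongrightarrow> 1/c - 2*0) (at_right 0)" by (intro tendsto_intros; simp)
    show "1 < 1/c - 2*0" using c by simp
  qed
  have e3: "\<forall>\<^sub>F x in at_right 0. c * (exp (2*x) + 4*x) \<le> 1"
  proof (rule ev_le[OF _ tendsto_const])
    show "((\<lambda>x::real. c * (exp (2*x) + 4*x)) \<longlongrightarrow> c * (exp (2*0) + 4*0)) (at_right 0)" by (intro tendsto_intros; simp)
    show "c * (exp (2*0) + 4*0) < 1" using c by simp
  qed
  have e4: "\<forall>\<^sub>F x in at_right 0. (c + 2*x)/2 + 10*x \<le> (1/c - 2*x)/2"
  proof (rule ev_le)
    show "((\<lambda>x::real. (c + 2*x)/2 + 10*x) \<longlongrightarrow> (c + 2*0)/2 + 10*0) (at_right 0)" by (intro tendsto_intros; simp)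
    show "((\<lambda>x::real. (1/c - 2*x)/2) \<longlongrightarrow> (1/c - 2*0)/2) (at_right 0)" by (intro tendsto_intros; simp)
    show "(c + 2*0)/2 + 10*0 < (1/c - 2*0)/2" using cc by simp
  qed
  have e5: "\<forall>\<^sub>F x in at_right 0. c * (1/2 + (2*x) powr \<delta> / 2) + 2*x \<le> exp (-x) * (1/c - 2*x) / 2"
  proof (rule ev_le)
    show "((\<lambda>x::real. c * (1/2 + (2*x) powr \<delta> / 2) + 2*x) \<longlongrightarrow> c * (1/2 + 0 / 2) + 2*0) (at_right 0)"
      by (intro tendsto_intros pw1; simp)
    show "((\<lambda>x::real. exp (-x) * (1/c - 2*x) / 2) \<longlongrightarrow> exp (-0) * (1/c - 2*0) / 2) (at_right 0)"
      by (intro tendsto_intros; simp)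
    show "c * (1/2 + 0 / 2) + 2*0 < exp (-0) * (1/c - 2*0) / 2" using cc by simp
  qed
  have e6: "\<forall>\<^sub>F x in at_right 0. c/1000 + 4*x \<le> exp (-x) / 1000"
  proof (rule ev_le)
    show "((\<lambda>x::real. c/1000 + 4*x) \<longlongrightarrow> c/1000 + 4*0) (at_right 0)" by (intro tendsto_intros; simp)
    show "((\<lambda>x::real. exp (-x) / 1000) \<longlongrightarrow> exp (-0) / 1000) (at_right 0)" by (intro tendsto_intros; simp)
    show "c/1000 + 4*0 < exp (-0) / 1000" using c by simp
  qed
  have e7: "\<forall>\<^sub>F x in at_right 0. c + 4*x \<le> k"
  proof (rule ev_le[OF _ tendsto_const])
    show "((\<lambda>x::real. c + 4*x) \<longlongrightarrow> c + 4*0) (at_right 0)" by (intro tendsto_intros; simp)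
    show "c + 4*0 < k" using k by simp
  qed
  have kc: "c < k / c" using k c by (simp add: field_simps)
  have e8: "\<forall>\<^sub>F x in at_right 0. c + 2*x \<le> k * (1/c - 2*x)"
  proof (rule ev_le)
    show "((\<lambda>x::real. c + 2*x) \<longlongrightarrow> c + 2*0) (at_right 0)" by (intro tendsto_intros; simp)
    show "((\<lambda>x::real. k * (1/c - 2*x)) \<longlongrightarrow> k * (1/c - 2*0)) (at_right 0)" by (intro tendsto_intros; simp)
    show "c + 2*0 < k * (1/c - 2*0)" using kc by simp
  qed
  have e9: "\<forall>\<^sub>F x in at_right 0. (c + 2*x) * x powr \<delta> / 2 + 8*x \<le> k * (1/c - 2*x)"
  proof (rule ev_le)
    show "((\<lambda>x::real. (c + 2*x) * x powr \<delta> / 2 + 8*x) \<longlongrightarrow> (c + 2*0) * 0 / 2 + 8*0) (at_right 0)"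
      by (intro tendsto_intros pw2; simp)
    show "((\<lambda>x::real. k * (1/c - 2*x)) \<longlongrightarrow> k * (1/c - 2*0)) (at_right 0)" by (intro tendsto_intros; simp)
    show "(c + 2*0) * 0 / 2 + 8*0 < k * (1/c - 2*0)" using k c by simp
  qed
  have "\<forall>\<^sub>F x in at_right 0. x \<le> 1/100 \<and> 1 \<le> 1/c - 2*x \<and>
    c * (exp (2*x) + 4*x) \<le> 1 \<and>
    (c + 2*x)/2 + 10*x \<le> (1/c - 2*x)/2 \<and>
    c * (1/2 + (2*x) powr \<delta> / 2) + 2*x \<le> exp (-x) * (1/c - 2*x) / 2 \<and>
    c/1000 + 4*x \<le> exp (-x) / 1000 \<and>
    c + 4*x \<le> k \<and>
    c + 2*x \<le> k * (1/c - 2*x) \<and>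
    (c + 2*x) * x powr \<delta> / 2 + 8*x \<le> k * (1/c - 2*x)"
    by (intro eventually_conj e0 e1 e3 e4 e5 e6 e7 e8 e9)
  then obtain b where b: "b > 0" and P: "\<forall>y>0. y < b \<longrightarrow> y \<le> 1/100 \<and> 1 \<le> 1/c - 2*y \<and>
    c * (exp (2*y) + 4*y) \<le> 1 \<and>
    (c + 2*y)/2 + 10*y \<le> (1/c - 2*y)/2 \<and>
    c * (1/2 + (2*y) powr \<delta> / 2) + 2*y \<le> exp (-y) * (1/c - 2*y) / 2 \<and>
    c/1000 + 4*y \<le> exp (-y) / 1000 \<and>
    c + 4*y \<le> k \<and>
    c + 2*y \<le> k * (1/c - 2*y) \<and>
    (c + 2*y) * y powr \<delta> / 2 + 8*y \<le> k * (1/c - 2*y)"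
    unfolding eventually_at_right_field by auto
  show ?thesis using b P by blast
qed


lemma core:
  fixes \<delta> chi \<epsilon> r p \<eta> pt \<eta>t :: real and D1 :: "'a::euclidean_space \<Rightarrow> 'a" and D2 :: "'b::euclidean_space \<Rightarrow> 'b"
    and H :: "'a \<times> 'b \<Rightarrow> 'a \<times> 'b"
  assumes \<delta>0: "0 < \<delta>" and \<delta>1: "\<delta> < 1" and chi: "0 < chi"
    and small: "\<epsilon> \<le> 1/100 \<and> 1 \<le> 1/exp (-chi) - 2*\<epsilon> \<and>
    exp (-chi) * (exp (2*\<epsilon>) + 4*\<epsilon>) \<le> 1 \<and>
    (exp (-chi) + 2*\<epsilon>)/2 + 10*\<epsilon> \<le> (1/exp (-chi) - 2*\<epsilon>)/2 \<and>
    exp (-chi) * (1/2 + (2*\<epsilon>) powr \<delta> / 2) + 2*\<epsilon> \<le> exp (-\<epsilon>) * (1/exp (-chi) - 2*\<epsilon>) / 2 \<and>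
    exp (-chi)/1000 + 4*\<epsilon> \<le> exp (-\<epsilon>) / 1000 \<and>
    exp (-chi) + 4*\<epsilon> \<le> exp (-chi/2) \<and>
    exp (-chi) + 2*\<epsilon> \<le> exp (-chi/2) * (1/exp (-chi) - 2*\<epsilon>) \<and>
    (exp (-chi) + 2*\<epsilon>) * \<epsilon> powr \<delta> / 2 + 8*\<epsilon> \<le> exp (-chi/2) * (1/exp (-chi) - 2*\<epsilon>)"
    and e0: "0 < \<epsilon>" and r0: "0 < r" and r\<delta>: "2 * r powr \<delta> < \<epsilon>"
    and \<eta>0: "0 < \<eta>" and \<eta>p: "\<eta> \<le> p" and pr: "p \<le> r / 2"
    and \<eta>t0: "0 < \<eta>t" and \<eta>tpt: "\<eta>t \<le> pt"
    and ptp: "pt \<le> exp \<epsilon> * p" and \<eta>t1: "exp (-\<epsilon>) \<le> \<eta>t / \<eta>" and \<eta>t2: "\<eta>t / \<eta> \<le> exp \<epsilon>"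
    and D1l: "linear D1" and D1b: "bij D1" and D1n: "onorm (inv D1) < exp (-chi)"
    and D2l: "linear D2" and D2bij: "bij D2" and D2n: "onorm D2 < exp (-chi)"
    and HC: "C1delta_on \<delta> (cball 0 r) H"
    and H0: "norm (H 0) < \<epsilon> * \<eta>"
    and Hd: "\<forall>t\<in>{\<eta>..2*p}. c0norm (cball 0 t) (dfun (cball 0 r) H) < \<epsilon> * t powr \<delta>"
    and Hh: "hol \<delta> (cball 0 r) (dfun (cball 0 r) H) < \<epsilon>"
  shows "let F = (\<lambda>z. (D1 (fst z), D2 (snd z)) + H z) in
      (\<forall>G. adm_fun \<delta> p \<eta> G \<longrightarrow> (\<exists>!W. W \<in> Mu \<delta> pt \<eta>t \<and> W \<subseteq> F ` graph_on p G)) \<and>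
      (\<forall>G1 G2 Gt1 Gt2.
         adm_fun \<delta> p \<eta> G1 \<and> adm_fun \<delta> p \<eta> G2 \<and>
         adm_fun \<delta> pt \<eta>t Gt1 \<and> adm_fun \<delta> pt \<eta>t Gt2 \<and>
         graph_on pt Gt1 \<subseteq> F ` graph_on p G1 \<and> graph_on pt Gt2 \<subseteq> F ` graph_on p G2 \<longrightarrow>
         dC0 pt Gt1 Gt2 \<le> exp (-chi/2) * dC0 p G1 G2 \<and>
         dC1 pt Gt1 Gt2 \<le> exp (-chi/2) * (dC1 p G1 G2 + dC0 p G1 G2 powr \<delta>))"
proof -
  define c where "c = exp (-chi)"
  define k where "k = exp (-chi/2)"
  have c0: "0 < c" unfolding c_def by simp
  have c1: "c < 1" unfolding c_def using chi by simp
  have li: "linear (inv D1)" by (rule inj_linear_imp_inv_linear[OF D1l bij_is_inj[OF D1b]])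
  have bl1: "bounded_linear (inv D1)" using li linear_conv_bounded_linear by blast
  have D1i: "\<And>y. norm (inv D1 y) \<le> c * norm y"
  proof -
    fix y
    have "norm (inv D1 y) \<le> onorm (inv D1) * norm y" by (rule onorm[OF bl1])
    also have "\<dots> \<le> c * norm y" using D1n unfolding c_def by (intro mult_right_mono) auto
    finally show "norm (inv D1 y) \<le> c * norm y" .
  qed
  have bl2: "bounded_linear D2" using D2l linear_conv_bounded_linear by blast
  have D2i: "\<And>y. norm (D2 y) \<le> c * norm y"
  proof -
    fix y
    have "norm (D2 y) \<le> onorm D2 * norm y" by (rule onorm[OF bl2])
    also have "\<dots> \<le> c * norm y" using D2n unfolding c_def by (intro mult_right_mono) auto
    finally show "norm (D2 y) \<le> c * norm y" .
  qed
  have "GT D1 D2 c \<epsilon> \<delta> r p \<eta> pt \<eta>t k H"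
    unfolding GT_def GT_axioms_def ops_def
    apply (insert small[folded c_def k_def] D1i D2i \<delta>0 \<delta>1 c0 c1 e0 r0 r\<delta> \<eta>0 \<eta>p pr \<eta>t0 \<eta>tpt ptp \<eta>t1 D1l D1b D2l HC H0 Hd Hh)
    apply (elim conjE)
    apply (intro conjI allI)
    apply assumption+
    done
  then interpret GT D1 D2 c \<epsilon> \<delta> r p \<eta> pt \<eta>t k H .
  have F: "(\<lambda>z. (D1 (fst z), D2 (snd z)) + H z) = Fm" by (rule ext) (simp add: Fm_def)
  show ?thesis unfolding Let_def F k_def[symmetric]
  proof (rule conjI)
    show "\<forall>G. adm_fun \<delta> p \<eta> G \<longrightarrow> (\<exists>!W. W \<in> Mu \<delta> pt \<eta>t \<and> W \<subseteq> Fm ` graph_on p G)"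
      using part1 by blast
    show "\<forall>G1 G2 Gt1 Gt2.
         adm_fun \<delta> p \<eta> G1 \<and> adm_fun \<delta> p \<eta> G2 \<and>
         adm_fun \<delta> pt \<eta>t Gt1 \<and> adm_fun \<delta> pt \<eta>t Gt2 \<and>
         graph_on pt Gt1 \<subseteq> Fm ` graph_on p G1 \<and> graph_on pt Gt2 \<subseteq> Fm ` graph_on p G2 \<longrightarrow>
         dC0 pt Gt1 Gt2 \<le> k * dC0 p G1 G2 \<and>
         dC1 pt Gt1 Gt2 \<le> k * (dC1 p G1 G2 + dC0 p G1 G2 powr \<delta>)"
    proof (intro allI impI)
      fix G1 G2 :: "'a \<Rightarrow> 'b" and Gt1 Gt2 :: "'a \<Rightarrow> 'b"
      assume A: "adm_fun \<delta> p \<eta> G1 \<and> adm_fun \<delta> p \<eta> G2 \<and>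
         adm_fun \<delta> pt \<eta>t Gt1 \<and> adm_fun \<delta> pt \<eta>t Gt2 \<and>
         graph_on pt Gt1 \<subseteq> Fm ` graph_on p G1 \<and> graph_on pt Gt2 \<subseteq> Fm ` graph_on p G2"
      hence a1: "adm_fun \<delta> p \<eta> G1" and a2: "adm_fun \<delta> p \<eta> G2"
        and s1: "graph_on pt Gt1 \<subseteq> Fm ` graph_on p G1" and s2: "graph_on pt Gt2 \<subseteq> Fm ` graph_on p G2"
        by auto
      show "dC0 pt Gt1 Gt2 \<le> k * dC0 p G1 G2 \<and> dC1 pt Gt1 Gt2 \<le> k * (dC1 p G1 G2 + dC0 p G1 G2 powr \<delta>)"
        by (rule part2[OF a1 a2 s1 s2])
    qed
  qed
qed


theorem propositionA2:
  fixes \<delta> chi :: real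
  assumes "0 < \<delta>" "\<delta> < 1" "0 < chi"
  shows "\<exists>\<epsilon>0>0. \<forall>\<epsilon> r p \<eta> pt \<eta>t (D1 :: 'a::euclidean_space \<Rightarrow> 'a) (D2 :: 'b::euclidean_space \<Rightarrow> 'b)
           (H :: 'a \<times> 'b \<Rightarrow> 'a \<times> 'b).
    0 < \<epsilon> \<and> \<epsilon> < \<epsilon>0 \<and>
    0 < r \<and> 2 * r powr \<delta> < \<epsilon> \<and>
    0 < \<eta> \<and> \<eta> \<le> p \<and> p \<le> r / 2 \<and>
    0 < \<eta>t \<and> \<eta>t \<le> pt \<and>
    \<comment> \<open>(GT1)\<close>
    pt \<le> exp \<epsilon> * p \<and> exp (-\<epsilon>) \<le> \<eta>t / \<eta> \<and> \<eta>t / \<eta> \<le> exp \<epsilon> \<and>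
    \<comment> \<open>(GT2)\<close>
    linear D1 \<and> bij D1 \<and> onorm (inv D1) < exp (-chi) \<and>
    linear D2 \<and> bij D2 \<and> onorm D2 < exp (-chi) \<and>
    \<comment> \<open>(GT3)\<close>
    C1delta_on \<delta> (cball 0 r) H \<and>
    norm (H 0) < \<epsilon> * \<eta> \<and>
    (\<forall>t\<in>{\<eta>..2*p}. c0norm (cball 0 t) (dfun (cball 0 r) H) < \<epsilon> * t powr \<delta>) \<and>
    hol \<delta> (cball 0 r) (dfun (cball 0 r) H) < \<epsilon>
    \<longrightarrow>
    (let F = (\<lambda>z. (D1 (fst z), D2 (snd z)) + H z) in
      (\<forall>G. adm_fun \<delta> p \<eta> G \<longrightarrow> (\<exists>!W. W \<in> Mu \<delta> pt \<eta>t \<and> W \<subseteq> F ` graph_on p G)) \<and>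
      (\<forall>G1 G2 Gt1 Gt2.
         adm_fun \<delta> p \<eta> G1 \<and> adm_fun \<delta> p \<eta> G2 \<and>
         adm_fun \<delta> pt \<eta>t Gt1 \<and> adm_fun \<delta> pt \<eta>t Gt2 \<and>
         graph_on pt Gt1 \<subseteq> F ` graph_on p G1 \<and> graph_on pt Gt2 \<subseteq> F ` graph_on p G2 \<longrightarrow>
         dC0 pt Gt1 Gt2 \<le> exp (-chi/2) * dC0 p G1 G2 \<and>
         dC1 pt Gt1 Gt2 \<le> exp (-chi/2) * (dC1 p G1 G2 + dC0 p G1 G2 powr \<delta>)))"
proof -
  have ck: "exp (-chi) < exp (-chi/2)" using assms(3) by simp
  have ck2: "exp (-chi) * exp (-chi) < exp (-chi/2)"
  proof -
    have "exp (-chi) * exp (-chi) = exp (-chi + -chi)" by (rule exp_add[symmetric])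
    also have "\<dots> < exp (-chi/2)" using assms(3) by simp
    finally show ?thesis .
  qed
  have c1: "exp (-chi) < 1" using assms(3) by simp
  obtain \<epsilon>0 :: real where e0: "\<epsilon>0 > 0" and P: "\<forall>\<epsilon>. 0 < \<epsilon> \<and> \<epsilon> < \<epsilon>0 \<longrightarrow>
    \<epsilon> \<le> 1/100 \<and> 1 \<le> 1/exp (-chi) - 2*\<epsilon> \<and>
    exp (-chi) * (exp (2*\<epsilon>) + 4*\<epsilon>) \<le> 1 \<and>
    (exp (-chi) + 2*\<epsilon>)/2 + 10*\<epsilon> \<le> (1/exp (-chi) - 2*\<epsilon>)/2 \<and>
    exp (-chi) * (1/2 + (2*\<epsilon>) powr \<delta> / 2) + 2*\<epsilon> \<le> exp (-\<epsilon>) * (1/exp (-chi) - 2*\<epsilon>) / 2 \<and>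
    exp (-chi)/1000 + 4*\<epsilon> \<le> exp (-\<epsilon>) / 1000 \<and>
    exp (-chi) + 4*\<epsilon> \<le> exp (-chi/2) \<and>
    exp (-chi) + 2*\<epsilon> \<le> exp (-chi/2) * (1/exp (-chi) - 2*\<epsilon>) \<and>
    (exp (-chi) + 2*\<epsilon>) * \<epsilon> powr \<delta> / 2 + 8*\<epsilon> \<le> exp (-chi/2) * (1/exp (-chi) - 2*\<epsilon>)"
    using conds[OF assms(1) exp_gt_zero c1 ck ck2] by blast
  show ?thesis
    apply (rule exI[of _ \<epsilon>0])
    apply (intro conjI allI impI)
     apply (rule e0)
    apply (elim conjE)
    apply (rule_tac \<epsilon>=\<epsilon> and r=r in core[OF assms])
                        apply (rule P[rule_format])
                        apply (intro conjI; assumption)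
                        apply assumption+
    done
qed

end
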